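(* Let $T(n)$ denote the number of fixed polyiamonds with $n$ cells. If $\ell,m\ge 1$ are positive integers that are not both equal to $1$, then $T(\ell+m)\ge T(\ell)\,T(m)$.
   Context: The triangular lattice is the tiling of the plane by equilateral triangles; its cells come in two orientations. A polyiamond with $n$ cells is a finite set of $n$ cells of the triangular lattice that is edge-connected, i.e. the graph on the cells in which two cells are adjacent when they share an edge is connected. Two polyiamonds are considered the same if one is a translate of the other (no rotations or reflections allowed); $T(n)$ is the number of such translation classes of polyiamonds with $n$ cells. For example $T(1)=2$, $T(2)=3$, $T(3)=6$. *)

theory Defs
  imports Main
begin

text \<open>We use lattice coordinates: the lattice
points are a*u + b*v with u, v unit vectors at 60 degrees. The cell (x, y, False)
is the "up" triangle with vertices (x,y), (x+1,y), (x,y+1); the cell (x, y, True)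
is the "down" triangle with vertices (x+1,y), (x,y+1), (x+1,y+1).\<close>

type_synonym cell = "int \<times> int \<times> bool"

text \<open>Two cells are adjacent iff they share an edge. Each up triangle (x,y)
shares its three edges with the down triangles (x,y), (x,y-1), (x-1,y).\<close>

definition up_down_adj :: "cell \<Rightarrow> cell \<Rightarrow> bool" where
  "up_down_adj c d \<longleftrightarrow>
     (\<exists>x y. c = (x, y, False) \<and>
        (d = (x, y, True) \<or> d = (x, y - 1, True) \<or> d = (x - 1, y, True)))"

definition adjacent :: "cell \<Rightarrow> cell \<Rightarrow> bool" where
  "adjacent c d \<longleftrightarrow> up_down_adj c d \<or> up_down_adj d c"

definition edge_connected :: "cell set \<Rightarrow> bool" where
  "edge_connected P \<longleftrightarrow>
     (\<forall>c\<in>P. \<forall>d\<in>P. (c, d) \<in> {(a, b). a \<in> P \<and> b \<in> P \<and> adjacent a b}\<^sup>*)"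

definition polyiamond :: "nat \<Rightarrow> cell set \<Rightarrow> bool" where
  "polyiamond n P \<longleftrightarrow> finite P \<and> card P = n \<and> edge_connected P"

definition translate :: "int \<Rightarrow> int \<Rightarrow> cell set \<Rightarrow> cell set" where
  "translate a b P = (\<lambda>(x, y, s). (x + a, y + b, s)) ` P"

definition translation_class :: "nat \<Rightarrow> cell set \<Rightarrow> cell set set" where
  "translation_class n P = {Q. polyiamond n Q \<and> (\<exists>a b. Q = translate a b P)}"

definition T :: "nat \<Rightarrow> nat" where
  "T n = card {translation_class n P | P. polyiamond n P}"

end

theory Submission
  imports Defs
begin
type_synonym pt = "int \<times> int"

definition tr :: "pt \<Rightarrow> pt \<Rightarrow> pt" where "tr v c = (fst c + fst v, snd c + snd v)"
definition shift :: "pt \<Rightarrow> pt set \<Rightarrow> pt set" where "shift v S = tr v ` S"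
definition evv :: "pt \<Rightarrow> bool" where "evv v \<longleftrightarrow> even (fst v + snd v)"
definition po :: "pt \<Rightarrow> bool" where "po c \<longleftrightarrow> odd (fst c + snd c)"
definition badj :: "pt \<Rightarrow> pt \<Rightarrow> bool" where
 "badj c d \<longleftrightarrow> (snd d = snd c \<and> (fst d = fst c + 1 \<or> fst c = fst d + 1)) \<or>
              (fst d = fst c \<and> ((snd d = snd c + 1 \<and> po c) \<or> (snd c = snd d + 1 \<and> po d)))"
definition bedges :: "pt set \<Rightarrow> (pt \<times> pt) set" where
  "bedges S = {(a,b). a \<in> S \<and> b \<in> S \<and> badj a b}"
definition bconn :: "pt set \<Rightarrow> bool" where
  "bconn S \<longleftrightarrow> (\<forall>c\<in>S. \<forall>d\<in>S. (c,d) \<in> (bedges S)\<^sup>*)"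
definition bpoly :: "nat \<Rightarrow> pt set \<Rightarrow> bool" where
  "bpoly n S \<longleftrightarrow> finite S \<and> card S = n \<and> bconn S"
definition beq :: "pt set \<Rightarrow> pt set \<Rightarrow> bool" where
  "beq S S' \<longleftrightarrow> (\<exists>v. evv v \<and> S' = shift v S)"
definition bclass :: "nat \<Rightarrow> pt set \<Rightarrow> pt set set" where
  "bclass n S = {S'. bpoly n S' \<and> beq S S'}"
definition BCls :: "nat \<Rightarrow> pt set set set" where
  "BCls n = {bclass n S | S. bpoly n S}"

definition bpt :: "cell \<Rightarrow> pt" where
  "bpt c = (case c of (x,y,s) \<Rightarrow> (2*x + y + (if s then 1 else 0), y))"
definition bcell :: "pt \<Rightarrow> cell" where
  "bcell p = (case p of (k,r) \<Rightarrow> ((k - r - (if odd (k+r) then 1 else 0)) div 2, r, odd (k+r)))"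

lemma bcell_bpt[simp]: "bcell (bpt c) = c"
  by (cases c) (auto simp: bpt_def bcell_def)

lemma bpt_bcell[simp]: "bpt (bcell p) = p"
proof (cases p)
  case (Pair k r)
  show ?thesis
  proof (cases "odd (k+r)")
    case True
    then have "even (k - r - 1)" by presburger
    then have "2 * ((k - r - 1) div 2) = k - r - 1" by simp
    with True show ?thesis by (simp add: Pair bpt_def bcell_def)
  next
    case False
    then have "even (k - r)" by presburger
    then have "2 * ((k - r) div 2) = k - r" by simp
    with False show ?thesis by (simp add: Pair bpt_def bcell_def)
  qed
qed

lemma inj_bpt: "inj bpt"
  by (metis bcell_bpt injI)

lemma adjacent_bpt: "adjacent c d \<longleftrightarrow> badj (bpt c) (bpt d)"
  apply (cases c; cases d)
  apply (auto simp: adjacent_def up_down_adj_def badj_def bpt_def po_def)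
  apply presburger+
  done

lemma rtrancl_map_gen:
  assumes "\<And>x y. (x,y) \<in> r \<Longrightarrow> (f x, f y) \<in> s" and "(x,y) \<in> r\<^sup>*"
  shows "(f x, f y) \<in> s\<^sup>*"
  using assms(2) by induct (auto intro: rtrancl_into_rtrancl assms(1))

lemma edge_connected_bpt: "edge_connected P \<longleftrightarrow> bconn (bpt ` P)"
proof
  assume H: "edge_connected P"
  show "bconn (bpt ` P)"
    unfolding bconn_def
  proof (intro ballI)
    fix c' d' assume "c' \<in> bpt ` P" "d' \<in> bpt ` P"
    then obtain c d where cd: "c \<in> P" "d \<in> P" "c' = bpt c" "d' = bpt d" by auto
    have "(c,d) \<in> {(a, b). a \<in> P \<and> b \<in> P \<and> adjacent a b}\<^sup>*"
      using H cd unfolding edge_connected_def by auto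
    then have "(bpt c, bpt d) \<in> (bedges (bpt ` P))\<^sup>*"
      by (rule rtrancl_map_gen[rotated]) (auto simp: bedges_def adjacent_bpt)
    then show "(c', d') \<in> (bedges (bpt ` P))\<^sup>*" using cd by simp
  qed
next
  assume H: "bconn (bpt ` P)"
  show "edge_connected P"
    unfolding edge_connected_def
  proof (intro ballI)
    fix c d assume cd: "c \<in> P" "d \<in> P"
    have "(bpt c, bpt d) \<in> (bedges (bpt ` P))\<^sup>*" using H cd unfolding bconn_def by auto
    then have "(bcell (bpt c), bcell (bpt d)) \<in> {(a, b). a \<in> P \<and> b \<in> P \<and> adjacent a b}\<^sup>*"
      by (rule rtrancl_map_gen[rotated]) (auto simp: bedges_def adjacent_bpt)
    then show "(c, d) \<in> {(a, b). a \<in> P \<and> b \<in> P \<and> adjacent a b}\<^sup>*" by simp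
  qed
qed

lemma polyiamond_bpt: "polyiamond n P \<longleftrightarrow> bpoly n (bpt ` P)"
proof -
  have "finite (bpt ` P) \<longleftrightarrow> finite P" using inj_bpt
    by (simp add: finite_image_iff inj_on_subset)
  moreover have "card (bpt ` P) = card P" using inj_bpt
    by (simp add: card_image inj_on_subset)
  ultimately show ?thesis
    by (simp add: polyiamond_def bpoly_def edge_connected_bpt)
qed

lemma bpt_translate: "bpt ` translate a b P = shift (2*a+b, b) (bpt ` P)"
  unfolding translate_def shift_def image_image
  by (rule image_cong) (auto simp: bpt_def tr_def)

lemma bcell_image: "bpt ` (bcell ` S) = S"
  by (simp add: image_image)

lemma class_bpt:
  "(\<lambda>Q. bpt ` Q) ` translation_class n P = bclass n (bpt ` P)"
proof
  show "(\<lambda>Q. bpt ` Q) ` translation_class n P \<subseteq> bclass n (bpt ` P)"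
  proof
    fix S assume "S \<in> (\<lambda>Q. bpt ` Q) ` translation_class n P"
    then obtain Q a b where Q: "S = bpt ` Q" "polyiamond n Q" "Q = translate a b P"
      by (auto simp: translation_class_def)
    have "evv (2*a+b, b)" by (simp add: evv_def)
    moreover have "S = shift (2*a+b, b) (bpt ` P)" using Q bpt_translate by simp
    ultimately show "S \<in> bclass n (bpt ` P)"
      using Q polyiamond_bpt by (auto simp: bclass_def beq_def)
  qed
next
  show "bclass n (bpt ` P) \<subseteq> (\<lambda>Q. bpt ` Q) ` translation_class n P"
  proof
    fix S assume "S \<in> bclass n (bpt ` P)"
    then obtain v where v: "bpoly n S" "evv v" "S = shift v (bpt ` P)"
      by (auto simp: bclass_def beq_def)
    obtain u w where uw: "v = (u,w)" by (cases v)
    define a where "a = (u - w) div 2"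
    have "2*a + w = u" using v(2) uw unfolding a_def evv_def by auto
    then have "S = bpt ` translate a w P" using v(3) uw bpt_translate by simp
    moreover have "polyiamond n (translate a w P)"
      using v(1) \<open>S = bpt ` translate a w P\<close> polyiamond_bpt by simp
    ultimately show "S \<in> (\<lambda>Q. bpt ` Q) ` translation_class n P"
      by (auto simp: translation_class_def)
  qed
qed

lemma T_BCls: "T n = card (BCls n)"
proof -
  let ?F = "\<lambda>K. (\<lambda>Q. bpt ` Q) ` K"
  have inj1: "inj (\<lambda>Q. bpt ` Q)" using inj_bpt by (auto intro!: injI simp: inj_image_eq_iff)
  have inj2: "inj ?F" using inj1 by (auto intro!: injI simp: inj_image_eq_iff)
  have img: "?F ` {translation_class n P | P. polyiamond n P} = BCls n"
  proof
    show "?F ` {translation_class n P | P. polyiamond n P} \<subseteq> BCls n"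
      using class_bpt polyiamond_bpt unfolding BCls_def by fastforce
  next
    show "BCls n \<subseteq> ?F ` {translation_class n P | P. polyiamond n P}"
    proof
      fix K assume "K \<in> BCls n"
      then obtain S where S: "K = bclass n S" "bpoly n S" by (auto simp: BCls_def)
      have "S = bpt ` (bcell ` S)" by (simp add: image_image)
      then have "K = ?F (translation_class n (bcell ` S))" "polyiamond n (bcell ` S)"
        using S class_bpt polyiamond_bpt by metis+
      then show "K \<in> ?F ` {translation_class n P | P. polyiamond n P}" by blast
    qed
  qed
  have "card {translation_class n P | P. polyiamond n P} = card (?F ` {translation_class n P | P. polyiamond n P})"
    using inj2 by (simp add: card_image inj_on_subset)
  then show ?thesis using img by (simp add: T_def)
qed

lemma tr_simps[simp]: "fst (tr v c) = fst c + fst v" "snd (tr v c) = snd c + snd v"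
  by (simp_all add: tr_def)

lemma tr_tr[simp]: "tr v (tr w c) = tr (fst w + fst v, snd w + snd v) c"
  by (simp add: tr_def)

lemma tr_0[simp]: "tr (0,0) c = c" by (simp add: tr_def)

lemma tr_inj[simp]: "tr v c = tr v d \<longleftrightarrow> c = d"
  by (cases c; cases d) (simp add: tr_def)

lemma inj_tr: "inj (tr v)" by (simp add: inj_def)

lemma inj_on_tr[simp]: "inj_on (tr v) S" by (simp add: inj_on_def)

lemma tr_back[simp]: "tr (- fst v, - snd v) (tr v c) = c" "tr v (tr (- fst v, - snd v) c) = c"
  by (cases c; simp add: tr_def)+

lemma shift_shift[simp]: "shift v (shift w S) = shift (fst w + fst v, snd w + snd v) S"
  by (simp add: shift_def image_image)

lemma shift_0[simp]: "shift (0,0) S = S" by (simp add: shift_def)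

lemma shift_back[simp]: "shift (- fst v, - snd v) (shift v S) = S"
  by (simp add: shift_def image_image)

lemma mem_shift: "c \<in> shift v S \<longleftrightarrow> tr (- fst v, - snd v) c \<in> S"
proof
  assume "c \<in> shift v S"
  then obtain d where "d \<in> S" "c = tr v d" by (auto simp: shift_def)
  then show "tr (- fst v, - snd v) c \<in> S" by simp
next
  assume "tr (- fst v, - snd v) c \<in> S"
  then have "tr v (tr (- fst v, - snd v) c) \<in> tr v ` S" by blast
  then show "c \<in> shift v S" by (simp add: shift_def)
qed

lemma tr_mem_shift[simp]: "tr v c \<in> shift v S \<longleftrightarrow> c \<in> S"
  by (auto simp: shift_def)

lemma finite_shift[simp]: "finite (shift v S) \<longleftrightarrow> finite S"
  by (simp add: shift_def finite_image_iff)

lemma card_shift[simp]: "card (shift v S) = card S"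
  by (simp add: shift_def card_image)

lemma shift_union[simp]: "shift v (A \<union> B) = shift v A \<union> shift v B"
  by (simp add: shift_def image_Un)

lemma shift_diff[simp]: "shift v (A - B) = shift v A - shift v B"
  by (simp add: shift_def image_set_diff inj_tr)

lemma shift_insert[simp]: "shift v (insert c A) = insert (tr v c) (shift v A)"
  by (simp add: shift_def)

lemma shift_empty[simp]: "shift v {} = {}"
  by (simp add: shift_def)

lemma shift_Int[simp]: "shift v (A \<inter> B) = shift v A \<inter> shift v B"
  by (simp add: shift_def image_Int inj_tr)

lemma shift_eq_iff[simp]: "shift v A = shift v B \<longleftrightarrow> A = B"
  by (simp add: shift_def inj_image_eq_iff inj_tr)

lemma evv_add: "evv v \<Longrightarrow> evv w \<Longrightarrow> evv (fst w + fst v, snd w + snd v)"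
  by (simp add: evv_def)

lemma evv_neg: "evv v \<Longrightarrow> evv (- fst v, - snd v)"
  by (simp add: evv_def)

lemma po_tr[simp]: "evv v \<Longrightarrow> po (tr v c) = po c"
  by (simp add: po_def evv_def) presburger

lemma badj_tr[simp]: "evv v \<Longrightarrow> badj (tr v c) (tr v d) = badj c d"
  by (cases c; cases d) (auto simp: badj_def tr_def po_def evv_def; presburger)

lemma badj_sym: "badj c d \<Longrightarrow> badj d c"
  by (auto simp: badj_def)

lemma bconn_shift_aux:
  assumes "evv v" "bconn S" shows "bconn (shift v S)"
  unfolding bconn_def
proof (intro ballI)
  fix c' d' assume "c' \<in> shift v S" "d' \<in> shift v S"
  then obtain c d where cd: "c \<in> S" "d \<in> S" "c' = tr v c" "d' = tr v d"
    by (auto simp: shift_def)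
  have "(c,d) \<in> (bedges S)\<^sup>*" using assms(2) cd unfolding bconn_def by auto
  then have "(tr v c, tr v d) \<in> (bedges (shift v S))\<^sup>*"
    by (rule rtrancl_map_gen[rotated]) (auto simp: bedges_def assms(1))
  then show "(c', d') \<in> (bedges (shift v S))\<^sup>*" using cd by simp
qed

lemma bconn_shift[simp]: "evv v \<Longrightarrow> bconn (shift v S) \<longleftrightarrow> bconn S"
  by (metis bconn_shift_aux evv_neg shift_back)

lemma bpoly_shift[simp]: "evv v \<Longrightarrow> bpoly n (shift v S) \<longleftrightarrow> bpoly n S"
  by (simp add: bpoly_def)

lemma beq_refl: "beq S S"
  unfolding beq_def by (rule exI[of _ "(0,0)"]) (simp add: evv_def)

lemma beq_sym: "beq S S' \<Longrightarrow> beq S' S"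
  unfolding beq_def by (metis evv_neg shift_back)

lemma beq_trans: "beq S S' \<Longrightarrow> beq S' S'' \<Longrightarrow> beq S S''"
  unfolding beq_def by (metis evv_add shift_shift)

lemma beq_shift: "evv v \<Longrightarrow> beq S (shift v S)"
  unfolding beq_def by blast

lemma bclass_eq: "beq S S' \<Longrightarrow> bclass n S = bclass n S'"
  unfolding bclass_def by (auto intro: beq_trans beq_sym)

lemma bclass_mem: "bpoly n S \<Longrightarrow> S \<in> bclass n S"
  by (simp add: bclass_def beq_refl)

lemma bclass_eqD: "bpoly n S \<Longrightarrow> bclass n S = bclass n S' \<Longrightarrow> beq S' S"
  unfolding bclass_def using beq_refl by blast

lemma shift_fix:
  assumes "finite S" "S \<noteq> {}" "shift v S = S" shows "v = (0,0)"
proof -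
  have "(\<Sum>c\<in>shift v S. fst c) = (\<Sum>c\<in>S. fst (tr v c))"
    unfolding shift_def by (rule sum.reindex[unfolded comp_def]) simp
  also have "\<dots> = (\<Sum>c\<in>S. fst c) + of_nat (card S) * fst v"
    by (simp add: sum.distrib)
  finally have 1: "of_nat (card S) * fst v = 0" using assms(3) by simp
  have "(\<Sum>c\<in>shift v S. snd c) = (\<Sum>c\<in>S. snd (tr v c))"
    unfolding shift_def by (rule sum.reindex[unfolded comp_def]) simp
  also have "\<dots> = (\<Sum>c\<in>S. snd c) + of_nat (card S) * snd v"
    by (simp add: sum.distrib)
  finally have 2: "of_nat (card S) * snd v = 0" using assms(3) by simp
  have "card S \<noteq> 0" using assms by simp
  then show ?thesis using 1 2 by (cases v) simp
qed

lemma bedges_mono: "A \<subseteq> B \<Longrightarrow> bedges A \<subseteq> bedges B"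
  by (auto simp: bedges_def)

lemma rtr_mono: assumes "A \<subseteq> B" "(c,d) \<in> (bedges A)\<^sup>*" shows "(c,d) \<in> (bedges B)\<^sup>*"
  using rtrancl_mono[OF bedges_mono[OF assms(1)]] assms(2) by (rule subsetD)

lemma bconn_union:
  assumes "bconn A" "bconn B" "a \<in> A" "b \<in> B" "badj a b"
  shows "bconn (A \<union> B)"
  unfolding bconn_def
proof (intro ballI)
  let ?E = "bedges (A \<union> B)"
  have AA: "(c,d) \<in> ?E\<^sup>*" if "c \<in> A" "d \<in> A" for c d
  proof -
    have "(c,d) \<in> (bedges A)\<^sup>*" using assms(1) that unfolding bconn_def by blast
    then show ?thesis by (rule rtr_mono[rotated]) simp
  qed
  have BB: "(c,d) \<in> ?E\<^sup>*" if "c \<in> B" "d \<in> B" for c d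
  proof -
    have "(c,d) \<in> (bedges B)\<^sup>*" using assms(2) that unfolding bconn_def by blast
    then show ?thesis by (rule rtr_mono[rotated]) simp
  qed
  have ab: "(a,b) \<in> ?E" "(b,a) \<in> ?E" using assms(3-5) badj_sym[OF assms(5)] by (auto simp: bedges_def)
  have AB: "(c,d) \<in> ?E\<^sup>*" if "c \<in> A" "d \<in> B" for c d
  proof -
    have "(c,b) \<in> ?E\<^sup>*" using AA[OF that(1) assms(3)] ab(1) by (rule rtrancl_into_rtrancl)
    then show ?thesis using BB[OF assms(4) that(2)] by (rule rtrancl_trans)
  qed
  have BA: "(c,d) \<in> ?E\<^sup>*" if "c \<in> B" "d \<in> A" for c d
  proof -
    have "(c,a) \<in> ?E\<^sup>*" using BB[OF that(1) assms(4)] ab(2) by (rule rtrancl_into_rtrancl)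
    then show ?thesis using AA[OF assms(3) that(2)] by (rule rtrancl_trans)
  qed
  fix c d assume c: "c \<in> A \<union> B" and d: "d \<in> A \<union> B"
  show "(c,d) \<in> ?E\<^sup>*"
  proof (cases "c \<in> A")
    case cA: True
    show ?thesis
    proof (cases "d \<in> A")
      case True show ?thesis using AA[OF cA True] .
    next
      case False then have "d \<in> B" using d by simp
      then show ?thesis using AB[OF cA] by simp
    qed
  next
    case False
    then have cB: "c \<in> B" using c by simp
    show ?thesis
    proof (cases "d \<in> A")
      case True show ?thesis using BA[OF cB True] .
    next
      case False then have "d \<in> B" using d by simp
      then show ?thesis using BB[OF cB] by simp
    qed
  qed
qed


lemma bconn_single: "bconn {c}"
  by (simp add: bconn_def)

lemma badj_irrefl: "\<not> badj c c"
  by (auto simp: badj_def)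

lemma bconn_leaf:
  assumes "bconn S" "n \<in> S" "q \<noteq> n" "\<And>d. d \<in> S \<Longrightarrow> badj q d \<Longrightarrow> d = n"
  shows "bconn (S - {q})"
  unfolding bconn_def
proof (intro ballI)
  let ?E = "bedges S" and ?E' = "bedges (S - {q})"
  fix c d assume c: "c \<in> S - {q}" and d: "d \<in> S - {q}"
  have "(c,d) \<in> ?E\<^sup>*" using assms(1) c d unfolding bconn_def by auto
  then have "(d \<noteq> q \<longrightarrow> (c,d) \<in> ?E'\<^sup>*) \<and> (d = q \<longrightarrow> (c,n) \<in> ?E'\<^sup>*)"
  proof (induct rule: rtrancl_induct)
    case base then show ?case using c by simp
  next
    case (step y z)
    have yz: "y \<in> S" "z \<in> S" "badj y z" using step(2) by (auto simp: bedges_def)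
    have IH1: "y \<noteq> q \<Longrightarrow> (c,y) \<in> ?E'\<^sup>*" and IH2: "y = q \<Longrightarrow> (c,n) \<in> ?E'\<^sup>*"
      using step(3) by blast+
    consider "z = q" "y = q" | "z = q" "y \<noteq> q" | "z \<noteq> q" "y = q" | "z \<noteq> q" "y \<noteq> q" by blast
    then show ?case
    proof cases
      case 1 then show ?thesis using IH2[OF 1(2)] by simp
    next
      case 2
      then have "y = n" using assms(4)[OF yz(1)] badj_sym[OF yz(3)] by simp
      then show ?thesis using IH1[OF 2(2)] 2(1) by simp
    next
      case 3
      then have "z = n" using assms(4)[OF yz(2)] yz(3) by simp
      then show ?thesis using IH2[OF 3(2)] 3(1) by simp
    next
      case 4
      then have "(y,z) \<in> ?E'" using yz by (auto simp: bedges_def)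
      then have "(c,z) \<in> ?E'\<^sup>*" using IH1[OF 4(2)] by (simp add: rtrancl_into_rtrancl)
      then show ?thesis using 4 by simp
    qed
  qed
  then show "(c,d) \<in> ?E'\<^sup>*" using d by auto
qed

definition chp :: "pt \<Rightarrow> pt" where "chp c = (fst c, 1 - snd c)"
definition chi :: "pt set \<Rightarrow> pt set" where "chi S = chp ` S"

lemma chp_chp[simp]: "chp (chp c) = c" by (simp add: chp_def)
lemma chp_simps[simp]: "fst (chp c) = fst c" "snd (chp c) = 1 - snd c" by (simp_all add: chp_def)
lemma chp_inj[simp]: "chp c = chp d \<longleftrightarrow> c = d" by (metis chp_chp)
lemma inj_on_chp[simp]: "inj_on chp S" by (simp add: inj_on_def)
lemma po_chp[simp]: "po (chp c) = (\<not> po c)"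
proof -
  have "odd (fst c + (1 - snd c)) = (\<not> odd (fst c + snd c))" by presburger
  then show ?thesis by (simp add: po_def)
qed
lemma po_vert: "fst d = fst c \<Longrightarrow> snd d = snd c + 1 \<Longrightarrow> po d = (\<not> po c)"
  unfolding po_def by presburger

lemma badj_chp[simp]: "badj (chp c) (chp d) = badj c d"
proof -
  have A: "badj (chp c) (chp d) \<longleftrightarrow> (snd d = snd c \<and> (fst d = fst c + 1 \<or> fst c = fst d + 1)) \<or>
     (fst d = fst c \<and> ((snd c = snd d + 1 \<and> \<not> po c) \<or> (snd d = snd c + 1 \<and> \<not> po d)))"
    unfolding badj_def chp_simps po_chp by linarith
  show ?thesis unfolding A badj_def using po_vert[of c d] po_vert[of d c] by auto
qed
lemma chi_chi[simp]: "chi (chi S) = S" by (simp add: chi_def image_image)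
lemma mem_chi: "c \<in> chi S \<longleftrightarrow> chp c \<in> S"
  unfolding chi_def by (metis chp_chp image_iff)
lemma finite_chi[simp]: "finite (chi S) \<longleftrightarrow> finite S"
  by (simp add: chi_def finite_image_iff)
lemma card_chi[simp]: "card (chi S) = card S"
  by (simp add: chi_def card_image)
lemma chi_shift: "chi (shift v S) = shift (fst v, - snd v) (chi S)"
  unfolding chi_def shift_def image_image by (rule image_cong) (auto simp: chp_def tr_def)
lemma evv_chi: "evv (fst v, - snd v) = evv v" by (simp add: evv_def)

lemma bconn_chi_aux: "bconn S \<Longrightarrow> bconn (chi S)"
  unfolding bconn_def
proof (intro ballI)
  fix c' d' assume H: "\<forall>c\<in>S. \<forall>d\<in>S. (c, d) \<in> (bedges S)\<^sup>*" "c' \<in> chi S" "d' \<in> chi S"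
  then obtain c d where cd: "c \<in> S" "d \<in> S" "c' = chp c" "d' = chp d" by (auto simp: chi_def)
  have "(c,d) \<in> (bedges S)\<^sup>*" using H cd by auto
  then have "(chp c, chp d) \<in> (bedges (chi S))\<^sup>*"
    by (rule rtrancl_map_gen[rotated]) (auto simp: bedges_def chi_def)
  then show "(c', d') \<in> (bedges (chi S))\<^sup>*" using cd by simp
qed

lemma bconn_chi[simp]: "bconn (chi S) = bconn S"
proof
  assume "bconn (chi S)" then have "bconn (chi (chi S))" by (rule bconn_chi_aux)
  then show "bconn S" by simp
next
  assume "bconn S" then show "bconn (chi S)" by (rule bconn_chi_aux)
qed

lemma bpoly_chi[simp]: "bpoly n (chi S) = bpoly n S"
  by (simp add: bpoly_def)

lemma beq_chi: "beq S S' \<Longrightarrow> beq (chi S) (chi S')"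
proof -
  assume "beq S S'"
  then obtain v where v: "evv v" "S' = shift v S" by (auto simp: beq_def)
  then have "chi S' = shift (fst v, - snd v) (chi S)" by (simp add: chi_shift)
  moreover have "evv (fst v, - snd v)" using v(1) by (simp add: evv_chi)
  ultimately show ?thesis unfolding beq_def by blast
qed

lemma beq_chiD: "beq (chi S) (chi S') \<Longrightarrow> beq S S'"
proof -
  assume H: "beq (chi S) (chi S')"
  have "beq (chi (chi S)) (chi (chi S'))" by (rule beq_chi[OF H])
  then show ?thesis by (simp only: chi_chi)
qed

lemma badj_fst: "badj y z \<Longrightarrow> \<bar>fst z - fst y\<bar> \<le> 1"
  by (auto simp: badj_def)

lemma badj_snd: "badj y z \<Longrightarrow> \<bar>snd z - snd y\<bar> \<le> 1"
  by (auto simp: badj_def)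

lemma path_range:
  fixes f :: "pt \<Rightarrow> int"
  assumes f: "\<And>y z. badj y z \<Longrightarrow> \<bar>f z - f y\<bar> \<le> 1"
    and p: "(c,d) \<in> (bedges S)\<^sup>*" and c: "c \<in> S"
  shows "\<forall>k. min (f c) (f d) \<le> k \<and> k \<le> max (f c) (f d) \<longrightarrow> (\<exists>e\<in>S. f e = k)"
  using p
proof (induct rule: rtrancl_induct)
  case base
  then show ?case using c by auto
next
  case (step y z)
  have z: "z \<in> S" and yz: "badj y z" using step(2) by (auto simp: bedges_def)
  have fz: "\<bar>f z - f y\<bar> \<le> 1" using f[OF yz] .
  show ?case
  proof (intro allI impI)
    fix k assume k: "min (f c) (f z) \<le> k \<and> k \<le> max (f c) (f z)"
    show "\<exists>e\<in>S. f e = k"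
    proof (cases "min (f c) (f y) \<le> k \<and> k \<le> max (f c) (f y)")
      case True then show ?thesis using step(3) by blast
    next
      case False
      then have "k = f z" using k fz by linarith
      then show ?thesis using z by blast
    qed
  qed
qed

lemma conn_bound:
  fixes f :: "pt \<Rightarrow> int"
  assumes f: "\<And>y z. badj y z \<Longrightarrow> \<bar>f z - f y\<bar> \<le> 1"
    and S: "finite S" "bconn S" and cd: "c \<in> S" "d \<in> S"
  shows "\<bar>f d - f c\<bar> < int (card S)"
proof -
  have p: "(c,d) \<in> (bedges S)\<^sup>*" using S(2) cd unfolding bconn_def by blast
  have "{min (f c) (f d) .. max (f c) (f d)} \<subseteq> f ` S"
    using path_range[OF f p cd(1)] by fastforce
  then have "card {min (f c) (f d) .. max (f c) (f d)} \<le> card (f ` S)"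
    by (rule card_mono[OF finite_imageI[OF S(1)]])
  also have "\<dots> \<le> card S" using S(1) by (rule card_image_le)
  finally have "nat (max (f c) (f d) + 1 - min (f c) (f d)) \<le> card S" by simp
  then show ?thesis by linarith
qed

definition Box :: "nat \<Rightarrow> pt set" where
  "Box n = {- int n .. int n + 1} \<times> {- int n .. int n}"

lemma finite_Box: "finite (Box n)" by (simp add: Box_def)

lemma normalize:
  assumes "bpoly n S"
  shows "\<exists>S'. S' \<subseteq> Box n \<and> beq S S'"
proof (cases "S = {}")
  case True then show ?thesis using beq_refl by (auto simp: Box_def)
next
  case False
  then obtain c where c: "c \<in> S" by blast
  define \<delta> :: int where "\<delta> = (if po c then 1 else 0)"
  define v where "v = (\<delta> - fst c, - snd c)"
  have ev: "evv v" unfolding v_def \<delta>_def evv_def po_def by auto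
  have S: "finite S" "bconn S" "card S = n" using assms by (auto simp: bpoly_def)
  have "shift v S \<subseteq> Box n"
  proof
    fix d' assume "d' \<in> shift v S"
    then obtain d where d: "d \<in> S" "d' = tr v d" by (auto simp: shift_def)
    have 1: "\<bar>fst d - fst c\<bar> < int n" using conn_bound[OF badj_fst S(1,2) c d(1)] S(3) by simp
    have 2: "\<bar>snd d - snd c\<bar> < int n" using conn_bound[OF badj_snd S(1,2) c d(1)] S(3) by simp
    have "\<delta> \<ge> 0" "\<delta> \<le> 1" by (auto simp: \<delta>_def)
    then show "d' \<in> Box n" using 1 2 d(2) unfolding Box_def v_def mem_Times_iff tr_simps by auto
  qed
  then show ?thesis using beq_shift[OF ev] by blast
qed

lemma finite_BCls: "finite (BCls n)"
proof -
  have "BCls n \<subseteq> bclass n ` Pow (Box n)"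
  proof
    fix K assume "K \<in> BCls n"
    then obtain S where S: "K = bclass n S" "bpoly n S" by (auto simp: BCls_def)
    obtain S' where S': "S' \<subseteq> Box n" "beq S S'" using normalize[OF S(2)] by blast
    have "K = bclass n S'" using S(1) bclass_eq[OF S'(2)] by simp
    then show "K \<in> bclass n ` Pow (Box n)" using S'(1) by blast
  qed
  moreover have "finite (bclass n ` Pow (Box n))" using finite_Box by simp
  ultimately show ?thesis by (rule finite_subset)
qed

definition maxc :: "pt set \<Rightarrow> int" where "maxc S = Max (fst ` S)"
definition minc :: "pt set \<Rightarrow> int" where "minc S = Min (fst ` S)"
definition colr :: "pt set \<Rightarrow> int \<Rightarrow> int set" where "colr S k = {r. (k,r) \<in> S}"
definition place :: "pt set \<Rightarrow> pt \<Rightarrow> pt \<Rightarrow> pt set" where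
  "place S s d = shift (fst d - fst s, snd d - snd s) S"
definition Rst :: "pt set \<Rightarrow> int \<Rightarrow> int \<Rightarrow> pt set" where
  "Rst R x b = insert (x+1, b-1) (R - {(x,b)})"

lemma maxc_ge: "finite S \<Longrightarrow> c \<in> S \<Longrightarrow> fst c \<le> maxc S"
  unfolding maxc_def by simp

lemma maxc_in: "finite S \<Longrightarrow> S \<noteq> {} \<Longrightarrow> \<exists>c\<in>S. fst c = maxc S"
proof -
  assume "finite S" "S \<noteq> {}"
  then have "maxc S \<in> fst ` S" unfolding maxc_def by (intro Max_in) auto
  then obtain c where "c \<in> S" "maxc S = fst c" by (rule imageE)
  then show ?thesis by auto
qed

lemma minc_le: "finite S \<Longrightarrow> c \<in> S \<Longrightarrow> minc S \<le> fst c"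
  unfolding minc_def by simp

lemma minc_in: "finite S \<Longrightarrow> S \<noteq> {} \<Longrightarrow> \<exists>c\<in>S. fst c = minc S"
proof -
  assume "finite S" "S \<noteq> {}"
  then have "minc S \<in> fst ` S" unfolding minc_def by (intro Min_in) auto
  then obtain c where "c \<in> S" "minc S = fst c" by (rule imageE)
  then show ?thesis by auto
qed

lemma colr_mem[simp]: "r \<in> colr S k \<longleftrightarrow> (k,r) \<in> S"
  by (simp add: colr_def)

lemma finite_colr: "finite S \<Longrightarrow> finite (colr S k)"
proof -
  assume "finite S"
  have "colr S k \<subseteq> snd ` S" by (force simp: colr_def)
  then show ?thesis using \<open>finite S\<close> by (rule finite_subset[OF _ finite_imageI])
qed

lemma colr_ne: "finite S \<Longrightarrow> S \<noteq> {} \<Longrightarrow> colr S (maxc S) \<noteq> {}"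
  using maxc_in by fastforce

lemma colr_ne2: "finite S \<Longrightarrow> S \<noteq> {} \<Longrightarrow> colr S (minc S) \<noteq> {}"
  using minc_in by fastforce

lemma mem_shift2: "(k, r) \<in> shift v S \<longleftrightarrow> (k - fst v, r - snd v) \<in> S"
  by (simp add: mem_shift tr_def)

lemma colr_shift: "colr (shift v S) k = (\<lambda>r. r + snd v) ` colr S (k - fst v)"
proof (rule set_eqI)
  fix r
  show "r \<in> colr (shift v S) k \<longleftrightarrow> r \<in> (\<lambda>r. r + snd v) ` colr S (k - fst v)"
  proof
    assume "r \<in> colr (shift v S) k"
    then have "r - snd v \<in> colr S (k - fst v)" by (simp add: mem_shift2)
    then show "r \<in> (\<lambda>r. r + snd v) ` colr S (k - fst v)" by (rule image_eqI[rotated]) simp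
  next
    assume "r \<in> (\<lambda>r. r + snd v) ` colr S (k - fst v)"
    then show "r \<in> colr (shift v S) k" by (auto simp: mem_shift2)
  qed
qed

lemma place_src: "tr (fst d - fst s, snd d - snd s) s = d"
  by (simp add: tr_def)

lemma evv_po: "po s = po d \<Longrightarrow> evv (fst d - fst s, snd d - snd s)"
proof -
  assume "po s = po d"
  then have "odd (fst s + snd s) = odd (fst d + snd d)" by (simp add: po_def)
  then have "even (fst d - fst s + (snd d - snd s))" by presburger
  then show ?thesis by (simp add: evv_def)
qed

lemma po_right: "po (k+1, r) = (\<not> po (k, r))"
  unfolding po_def fst_conv snd_conv by presburger

lemma po_up: "po (k, r+1) = (\<not> po (k, r))"
  unfolding po_def fst_conv snd_conv by presburger

lemma po_down: "po (k, r - 1) = (\<not> po (k, r))"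
  unfolding po_def fst_conv snd_conv by presburger

lemma po_diag: "po (k+1, r - 1) = po (k, r)"
  unfolding po_def fst_conv snd_conv by presburger

lemma badj_right: "badj (k, r) (k+1, r)"
  by (simp add: badj_def)

lemma badj_upI: "po (k, r) \<Longrightarrow> badj (k, r) (k, r+1)"
  by (simp add: badj_def)

lemma chi_colr: "colr (chi S) k = (\<lambda>b. 1 - b) ` colr S k"
proof (rule set_eqI)
  fix r show "r \<in> colr (chi S) k \<longleftrightarrow> r \<in> (\<lambda>b. 1 - b) ` colr S k"
  proof
    assume "r \<in> colr (chi S) k"
    then have "1 - r \<in> colr S k" by (simp add: mem_chi chp_def)
    then show "r \<in> (\<lambda>b. 1 - b) ` colr S k" by (rule image_eqI[rotated]) simp
  next
    assume "r \<in> (\<lambda>b. 1 - b) ` colr S k"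
    then show "r \<in> colr (chi S) k" by (auto simp: mem_chi chp_def)
  qed
qed

lemma fst_chi: "fst ` chi S = fst ` S"
  by (simp add: chi_def image_image)

lemma minc_chi[simp]: "minc (chi S) = minc S"
  by (simp add: minc_def fst_chi)

lemma po_chi_mem: "(k, r) \<in> chi S \<longleftrightarrow> (k, 1 - r) \<in> S"
  by (simp add: mem_chi chp_def)

lemma po_flip: "po (k, 1 - r) = (\<not> po (k, r))"
  unfolding po_def fst_conv snd_conv by presburger

lemma shift_fst_ge:
  "(\<And>c. c \<in> S \<Longrightarrow> x \<le> fst c) \<Longrightarrow> c' \<in> shift v S \<Longrightarrow> x + fst v \<le> fst c'"
  by (auto simp: shift_def)

lemma exists_nbr:
  assumes "bconn S" "q \<in> S" "d \<in> S" "q \<noteq> d"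
  shows "\<exists>e\<in>S. badj q e"
proof -
  have "(q,d) \<in> (bedges S)\<^sup>*" using assms(1-3) unfolding bconn_def by blast
  then show ?thesis
  proof (cases rule: converse_rtranclE)
    case base then show ?thesis using assms(4) by simp
  next
    case (step e) then show ?thesis by (auto simp: bedges_def)
  qed
qed

lemma bpoly_card2_nbr:
  assumes "bpoly m S" "2 \<le> m" "q \<in> S"
  shows "\<exists>e\<in>S. badj q e"
proof -
  have "finite S" "card S = m" "bconn S" using assms(1) by (auto simp: bpoly_def)
  have "S - {q} \<noteq> {}"
  proof
    assume "S - {q} = {}"
    then have "S \<subseteq> {q}" by blast
    then have "card S \<le> 1" using card_mono[of "{q}" S] by simp
    then show False using assms(2) \<open>card S = m\<close> by simp
  qed
  then obtain d where "d \<in> S" "d \<noteq> q" by blast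
  then show ?thesis using exists_nbr[OF \<open>bconn S\<close> assms(3)] by blast
qed

definition AP where "AP P = colr P (maxc P)"
definition aP where "aP P = Max (AP P)"
definition ppP where "ppP P = po (maxc P, aP P)"
definition Ao where "Ao P = {r \<in> AP P. po (maxc P, r) \<noteq> ppP P}"
definition BQ where "BQ Q = colr Q (minc Q)"
definition Bo where "Bo P Q = {b \<in> BQ Q. po (minc Q, b) \<noteq> ppP P}"
definition BR where "BR Q = colr (chi Q) (minc Q)"
definition bR where "bR Q = Max (BR Q)"

definition kind :: "pt set \<Rightarrow> pt set \<Rightarrow> nat" where
"kind P Q = (if Bo P Q \<noteq> {} then 1 else if Ao P \<noteq> {} then 2 else if 2 \<le> card (AP P) then 3
   else if 2 \<le> card (BR Q) then 4 else if ppP P then 5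
   else if (minc Q + 1, bR Q - 1) \<in> chi Q then 6
   else if (minc Q + 1, bR Q + 1) \<in> chi Q then 7 else 8)"

definition encW :: "pt set \<Rightarrow> pt set \<Rightarrow> pt set" where
"encW P Q = (
   if kind P Q = 1 then place Q (minc Q, Max (Bo P Q)) (maxc P + 1, aP P)
   else if kind P Q = 2 then place Q (minc Q, Max (BQ Q)) (maxc P + 1, Max (Ao P))
   else if kind P Q = 3 then place (chi Q) (minc Q, bR Q) (maxc P + 1, Max (AP P - {aP P}))
   else if kind P Q = 4 then place (chi Q) (minc Q, Max (BR Q - {bR Q})) (maxc P + 1, aP P)
   else if kind P Q = 5 then place (chi Q) (minc Q, bR Q) (maxc P, aP P + 1)
   else if kind P Q = 6 then place (chi Q) (minc Q, bR Q) (maxc P, aP P + 1)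
   else if kind P Q = 7 then place (Rst (chi Q) (minc Q) (bR Q)) (minc Q + 1, bR Q - 1) (maxc P + 1, aP P)
   else place (chi Q) (minc Q, bR Q) (maxc P, aP P - 1))"

definition enc :: "pt set \<Rightarrow> pt set \<Rightarrow> pt set" where "enc P Q = P \<union> encW P Q"

lemma kind_range: "kind P Q \<in> {1,2,3,4,5,6,7,8}"
  by (simp add: kind_def)

context
  fixes P :: "pt set" and l :: nat
  assumes hP: "bpoly l P" "1 \<le> l"
begin

lemma Pfin: "finite P" using hP by (simp add: bpoly_def)
lemma Pne: "P \<noteq> {}" using hP by (auto simp: bpoly_def)
lemma P_le: "c \<in> P \<Longrightarrow> fst c \<le> maxc P" using maxc_ge[OF Pfin] .
lemma A_fin: "finite (AP P)" unfolding AP_def using finite_colr[OF Pfin] .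
lemma A_ne: "AP P \<noteq> {}" unfolding AP_def using colr_ne[OF Pfin Pne] .
lemma a_in: "aP P \<in> AP P" unfolding aP_def using Max_in[OF A_fin A_ne] .
lemma a_mem: "(maxc P, aP P) \<in> P" using a_in by (simp add: AP_def)
lemma a_max: "r \<in> AP P \<Longrightarrow> r \<le> aP P" unfolding aP_def using Max_ge[OF A_fin] .
lemma Ao_empty: "Ao P = {} \<Longrightarrow> r \<in> AP P \<Longrightarrow> po (maxc P, r) = ppP P"
  by (auto simp: Ao_def)

end

context
  fixes Q :: "pt set" and m :: nat
  assumes hQ: "bpoly m Q" "2 \<le> m"
begin

lemma Qfin: "finite Q" using hQ by (simp add: bpoly_def)
lemma Qne: "Q \<noteq> {}" using hQ by (auto simp: bpoly_def)
lemma Q_ge: "c \<in> Q \<Longrightarrow> minc Q \<le> fst c" using minc_le[OF Qfin] .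
lemma B_fin: "finite (BQ Q)" unfolding BQ_def using finite_colr[OF Qfin] .
lemma B_ne: "BQ Q \<noteq> {}" unfolding BQ_def using colr_ne2[OF Qfin Qne] .
lemma R_poly: "bpoly m (chi Q)" using hQ by simp
lemma R_ge: "c \<in> chi Q \<Longrightarrow> minc Q \<le> fst c"
proof -
  assume "c \<in> chi Q"
  then have "chp c \<in> Q" by (simp add: mem_chi)
  then have "minc Q \<le> fst (chp c)" by (rule Q_ge)
  then show ?thesis by simp
qed
lemma BR_eq: "BR Q = (\<lambda>b. 1 - b) ` BQ Q" by (simp add: BR_def BQ_def chi_colr)
lemma BR_fin: "finite (BR Q)" using BR_eq B_fin by simp
lemma BR_ne: "BR Q \<noteq> {}" using BR_eq B_ne by simp
lemma bR_in: "bR Q \<in> BR Q" unfolding bR_def using Max_in[OF BR_fin BR_ne] .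
lemma bR_mem: "(minc Q, bR Q) \<in> chi Q" using bR_in by (simp add: BR_def)
lemma bR_max: "r \<in> BR Q \<Longrightarrow> r \<le> bR Q" unfolding bR_def using Max_ge[OF BR_fin] .

end

context
  fixes P Q :: "pt set" and l m :: nat
  assumes hP: "bpoly l P" "1 \<le> l" and hQ: "bpoly m Q" "2 \<le> m"
begin

lemma kf1: "kind P Q = 1 \<Longrightarrow> Bo P Q \<noteq> {}" by (auto simp: kind_def split: if_splits)
lemma kf2: "kind P Q \<noteq> 1 \<Longrightarrow> Bo P Q = {}" by (auto simp: kind_def split: if_splits)
lemma kf3: "kind P Q = 2 \<Longrightarrow> Ao P \<noteq> {}" by (auto simp: kind_def split: if_splits)
lemma kf4: "kind P Q \<ge> 3 \<Longrightarrow> Ao P = {}" by (auto simp: kind_def split: if_splits)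
lemma kf5: "kind P Q = 3 \<Longrightarrow> 2 \<le> card (AP P)" by (auto simp: kind_def split: if_splits)
lemma kf6: "kind P Q \<ge> 4 \<Longrightarrow> card (AP P) < 2" by (auto simp: kind_def split: if_splits)
lemma kf7: "kind P Q = 4 \<Longrightarrow> 2 \<le> card (BR Q)" by (auto simp: kind_def split: if_splits)
lemma kf8: "kind P Q \<ge> 5 \<Longrightarrow> card (BR Q) < 2" by (auto simp: kind_def split: if_splits)
lemma kf9: "kind P Q = 5 \<Longrightarrow> ppP P" by (auto simp: kind_def split: if_splits)
lemma kf10: "kind P Q \<ge> 6 \<Longrightarrow> \<not> ppP P" by (auto simp: kind_def split: if_splits)
lemma kf11: "kind P Q = 6 \<Longrightarrow> (minc Q + 1, bR Q - 1) \<in> chi Q" by (auto simp: kind_def split: if_splits)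
lemma kf12: "kind P Q \<ge> 7 \<Longrightarrow> (minc Q + 1, bR Q - 1) \<notin> chi Q" by (auto simp: kind_def split: if_splits)
lemma kf13: "kind P Q = 7 \<Longrightarrow> (minc Q + 1, bR Q + 1) \<in> chi Q" by (auto simp: kind_def split: if_splits)
lemma kf14: "kind P Q = 8 \<Longrightarrow> (minc Q + 1, bR Q + 1) \<notin> chi Q" by (auto simp: kind_def split: if_splits)

lemma BR_par: "Bo P Q = {} \<Longrightarrow> r \<in> BR Q \<Longrightarrow> po (minc Q, r) = (\<not> ppP P)"
proof -
  assume Bo: "Bo P Q = {}" and r: "r \<in> BR Q"
  then obtain b where b: "b \<in> BQ Q" "r = 1 - b" using BR_eq[OF hQ] by auto
  then have "po (minc Q, b) = ppP P" using Bo by (auto simp: Bo_def)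
  moreover have "po (minc Q, r) = (\<not> po (minc Q, b))" using b(2) po_flip[of "minc Q" b] by simp
  ultimately show ?thesis by simp
qed

lemma A_single: "kind P Q \<ge> 4 \<Longrightarrow> AP P = {aP P}"
proof -
  assume "kind P Q \<ge> 4"
  then have "card (AP P) < 2" by (rule kf6)
  moreover have "card (AP P) \<noteq> 0" using A_fin[OF hP] A_ne[OF hP] by simp
  ultimately have "card (AP P) = 1" by simp
  then obtain z where "AP P = {z}" by (rule card_1_singletonE)
  then show ?thesis using a_in[OF hP] by simp
qed

lemma BR_single: "kind P Q \<ge> 5 \<Longrightarrow> BR Q = {bR Q}"
proof -
  assume "kind P Q \<ge> 5"
  then have "card (BR Q) < 2" by (rule kf8)
  moreover have "card (BR Q) \<noteq> 0" using BR_fin[OF hQ] BR_ne[OF hQ] by simp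
  ultimately have "card (BR Q) = 1" by simp
  then obtain z where "BR Q = {z}" by (rule card_1_singletonE)
  then show ?thesis using bR_in[OF hQ] by simp
qed

lemma ppflip: "po (maxc P + 1, aP P) = (\<not> ppP P)"
  by (simp add: ppP_def po_right)

lemma k1:
  assumes "kind P Q = 1"
  shows "\<exists>v. evv v \<and> encW P Q = shift v Q \<and> (maxc P + 1, aP P) \<in> encW P Q \<and>
     (\<forall>c\<in>encW P Q. maxc P < fst c) \<and>
     (\<forall>r. aP P < r \<longrightarrow> (maxc P + 1, r) \<in> encW P Q \<longrightarrow> po (maxc P + 1, r) = ppP P)"
proof -
  let ?x = "minc Q" and ?X = "maxc P" and ?a = "aP P"
  have ne: "Bo P Q \<noteq> {}" using kf1[OF assms] .
  have fin: "finite (Bo P Q)" using B_fin[OF hQ] by (simp add: Bo_def)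
  define b1 where "b1 = Max (Bo P Q)"
  have b1: "b1 \<in> Bo P Q" unfolding b1_def using Max_in[OF fin ne] .
  have b1max: "\<And>r. r \<in> Bo P Q \<Longrightarrow> r \<le> b1" unfolding b1_def using Max_ge[OF fin] .
  have b1Q: "(?x, b1) \<in> Q" and b1p: "po (?x, b1) \<noteq> ppP P" using b1 by (auto simp: Bo_def BQ_def)
  define v where "v = (?X + 1 - ?x, ?a - b1)"
  have ev: "evv v" unfolding v_def using evv_po[of "(?x,b1)" "(?X+1, ?a)"] b1p ppflip by simp
  have W: "encW P Q = shift v Q" using assms by (simp add: encW_def place_def v_def b1_def)
  have 1: "(?X + 1, ?a) \<in> encW P Q"
  proof -
    have "tr v (?x, b1) = (?X+1, ?a)" by (simp add: v_def tr_def)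
    then show ?thesis using W b1Q by (metis tr_mem_shift)
  qed
  have 2: "\<forall>c\<in>encW P Q. ?X < fst c"
  proof
    fix c assume "c \<in> encW P Q"
    then obtain c0 where "c0 \<in> Q" "c = tr v c0" using W by (auto simp: shift_def)
    then show "?X < fst c" using Q_ge[OF hQ, of c0] by (simp add: v_def)
  qed
  have 3: "\<forall>r. ?a < r \<longrightarrow> (?X + 1, r) \<in> encW P Q \<longrightarrow> po (?X + 1, r) = ppP P"
  proof (intro allI impI)
    fix r assume r: "?a < r" "(?X + 1, r) \<in> encW P Q"
    then have "(?x, r - ?a + b1) \<in> Q" using W by (simp add: mem_shift2 v_def algebra_simps)
    then have inB: "r - ?a + b1 \<in> BQ Q" by (simp add: BQ_def)
    have "r - ?a + b1 \<notin> Bo P Q" using b1max r(1) by fastforce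
    then have "po (?x, r - ?a + b1) = ppP P" using inB by (simp add: Bo_def)
    moreover have "tr v (?x, r - ?a + b1) = (?X + 1, r)" by (simp add: v_def tr_def)
    ultimately show "po (?X + 1, r) = ppP P" using po_tr[OF ev] by metis
  qed
  show ?thesis using ev W 1 2 3 by blast
qed

lemma k2:
  assumes "kind P Q = 2"
  shows "\<exists>v a'. evv v \<and> encW P Q = shift v Q \<and> (maxc P, a') \<in> P \<and> (maxc P + 1, a') \<in> encW P Q \<and>
     (\<forall>c\<in>encW P Q. maxc P < fst c) \<and>
     (\<forall>r. (maxc P + 1, r) \<in> encW P Q \<longrightarrow> po (maxc P + 1, r) = ppP P)"
proof -
  let ?x = "minc Q" and ?X = "maxc P" and ?a = "aP P"
  have Bo: "Bo P Q = {}" using kf2 assms by simp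
  have ne: "Ao P \<noteq> {}" using kf3[OF assms] .
  have fin: "finite (Ao P)" using A_fin[OF hP] by (simp add: Ao_def)
  define a' where "a' = Max (Ao P)"
  have a': "a' \<in> Ao P" unfolding a'_def using Max_in[OF fin ne] .
  have a'P: "(?X, a') \<in> P" and a'p: "po (?X, a') \<noteq> ppP P" using a' by (auto simp: Ao_def AP_def)
  define b0 where "b0 = Max (BQ Q)"
  have b0: "b0 \<in> BQ Q" unfolding b0_def using Max_in[OF B_fin[OF hQ] B_ne[OF hQ]] .
  have b0Q: "(?x, b0) \<in> Q" using b0 by (simp add: BQ_def)
  have b0p: "po (?x, b0) = ppP P" using b0 Bo by (auto simp: Bo_def)
  define v where "v = (?X + 1 - ?x, a' - b0)"
  have ev: "evv v" unfolding v_def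
    using evv_po[of "(?x,b0)" "(?X+1, a')"] b0p a'p po_right[of ?X a'] by simp
  have W: "encW P Q = shift v Q" using assms by (simp add: encW_def place_def v_def a'_def b0_def)
  have 1: "(?X + 1, a') \<in> encW P Q"
  proof -
    have "tr v (?x, b0) = (?X+1, a')" by (simp add: v_def tr_def)
    then show ?thesis using W b0Q by (metis tr_mem_shift)
  qed
  have 2: "\<forall>c\<in>encW P Q. ?X < fst c"
  proof
    fix c assume "c \<in> encW P Q"
    then obtain c0 where "c0 \<in> Q" "c = tr v c0" using W by (auto simp: shift_def)
    then show "?X < fst c" using Q_ge[OF hQ, of c0] by (simp add: v_def)
  qed
  have 3: "\<forall>r. (?X + 1, r) \<in> encW P Q \<longrightarrow> po (?X + 1, r) = ppP P"
  proof (intro allI impI)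
    fix r assume r: "(?X + 1, r) \<in> encW P Q"
    then have "(?x, r - a' + b0) \<in> Q" using W by (simp add: mem_shift2 v_def algebra_simps)
    then have inB: "r - a' + b0 \<in> BQ Q" by (simp add: BQ_def)
    then have "po (?x, r - a' + b0) = ppP P" using Bo by (auto simp: Bo_def)
    moreover have "tr v (?x, r - a' + b0) = (?X + 1, r)" by (simp add: v_def tr_def)
    ultimately show "po (?X + 1, r) = ppP P" using po_tr[OF ev] by metis
  qed
  show ?thesis using ev W 1 2 3 a'P by blast
qed

lemma k3:
  assumes "kind P Q = 3"
  shows "\<exists>v a2. evv v \<and> encW P Q = shift v (chi Q) \<and> (maxc P, a2) \<in> P \<and> (maxc P + 1, a2) \<in> encW P Q \<and>
     (\<forall>c\<in>encW P Q. maxc P < fst c) \<and> (maxc P + 1, aP P) \<notin> encW P Q"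
proof -
  let ?x = "minc Q" and ?X = "maxc P" and ?a = "aP P" and ?b = "bR Q"
  have Bo: "Bo P Q = {}" using kf2 assms by simp
  have Ao: "Ao P = {}" using kf4 assms by simp
  have c2: "2 \<le> card (AP P)" using kf5[OF assms] .
  have fin: "finite (AP P - {?a})" using A_fin[OF hP] by simp
  have ne: "AP P - {?a} \<noteq> {}"
  proof
    assume "AP P - {?a} = {}"
    then have "AP P \<subseteq> {?a}" by blast
    then have "card (AP P) \<le> 1" using card_mono[of "{?a}" "AP P"] by simp
    then show False using c2 by simp
  qed
  define a2 where "a2 = Max (AP P - {?a})"
  have a2: "a2 \<in> AP P - {?a}" unfolding a2_def using Max_in[OF fin ne] .
  have a2P: "(?X, a2) \<in> P" using a2 by (simp add: AP_def)
  have a2lt: "a2 < ?a" using a2 a_max[OF hP, of a2] by auto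
  have a2p: "po (?X, a2) = ppP P" using Ao_empty[OF hP Ao] a2 by simp
  have bp: "po (?x, ?b) = (\<not> ppP P)" using BR_par[OF Bo bR_in[OF hQ]] .
  define v where "v = (?X + 1 - ?x, a2 - ?b)"
  have ev: "evv v" unfolding v_def
    using evv_po[of "(?x,?b)" "(?X+1, a2)"] bp a2p po_right[of ?X a2] by simp
  have W: "encW P Q = shift v (chi Q)" using assms by (simp add: encW_def place_def v_def a2_def)
  have 1: "(?X + 1, a2) \<in> encW P Q"
  proof -
    have "tr v (?x, ?b) = (?X+1, a2)" by (simp add: v_def tr_def)
    then show ?thesis using W bR_mem[OF hQ] by (metis tr_mem_shift)
  qed
  have 2: "\<forall>c\<in>encW P Q. ?X < fst c"
  proof
    fix c assume "c \<in> encW P Q"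
    then obtain c0 where "c0 \<in> chi Q" "c = tr v c0" using W by (auto simp: shift_def)
    then show "?X < fst c" using R_ge[OF hQ, of c0] by (simp add: v_def)
  qed
  have 3: "(?X + 1, ?a) \<notin> encW P Q"
  proof
    assume "(?X + 1, ?a) \<in> encW P Q"
    then have "(?x, ?a - (a2 - ?b)) \<in> chi Q" using W by (simp add: mem_shift2 v_def)
    then have "?a - (a2 - ?b) \<in> BR Q" by (simp add: BR_def)
    then have "?a - (a2 - ?b) \<le> ?b" by (rule bR_max[OF hQ])
    then show False using a2lt by simp
  qed
  show ?thesis using ev W 1 2 3 a2P by blast
qed

lemma k4:
  assumes "kind P Q = 4"
  shows "\<exists>v. evv v \<and> encW P Q = shift v (chi Q) \<and> (maxc P + 1, aP P) \<in> encW P Q \<and>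
     (\<forall>c\<in>encW P Q. maxc P < fst c) \<and>
     (\<exists>r. aP P < r \<and> (maxc P + 1, r) \<in> encW P Q \<and> po (maxc P + 1, r) \<noteq> ppP P) \<and>
     (\<forall>r. (maxc P + 1, r) \<in> encW P Q \<longrightarrow> po (maxc P + 1, r) \<noteq> ppP P)"
proof -
  let ?x = "minc Q" and ?X = "maxc P" and ?a = "aP P" and ?b = "bR Q"
  have Bo: "Bo P Q = {}" using kf2 assms by simp
  have c2: "2 \<le> card (BR Q)" using kf7[OF assms] .
  have fin: "finite (BR Q - {?b})" using BR_fin[OF hQ] by simp
  have ne: "BR Q - {?b} \<noteq> {}"
  proof
    assume "BR Q - {?b} = {}"
    then have "BR Q \<subseteq> {?b}" by blast
    then have "card (BR Q) \<le> 1" using card_mono[of "{?b}" "BR Q"] by simp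
    then show False using c2 by simp
  qed
  define b2 where "b2 = Max (BR Q - {?b})"
  have b2: "b2 \<in> BR Q - {?b}" unfolding b2_def using Max_in[OF fin ne] .
  have b2R: "(?x, b2) \<in> chi Q" using b2 by (simp add: BR_def)
  have b2lt: "b2 < ?b" using b2 bR_max[OF hQ, of b2] by auto
  have b2p: "po (?x, b2) = (\<not> ppP P)" using BR_par[OF Bo] b2 by simp
  have bp: "po (?x, ?b) = (\<not> ppP P)" using BR_par[OF Bo bR_in[OF hQ]] .
  define v where "v = (?X + 1 - ?x, ?a - b2)"
  have ev: "evv v" unfolding v_def
    using evv_po[of "(?x,b2)" "(?X+1, ?a)"] b2p ppflip by simp
  have W: "encW P Q = shift v (chi Q)" using assms by (simp add: encW_def place_def v_def b2_def)
  have 1: "(?X + 1, ?a) \<in> encW P Q"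
  proof -
    have "tr v (?x, b2) = (?X+1, ?a)" by (simp add: v_def tr_def)
    then show ?thesis using W b2R by (metis tr_mem_shift)
  qed
  have 2: "\<forall>c\<in>encW P Q. ?X < fst c"
  proof
    fix c assume "c \<in> encW P Q"
    then obtain c0 where "c0 \<in> chi Q" "c = tr v c0" using W by (auto simp: shift_def)
    then show "?X < fst c" using R_ge[OF hQ, of c0] by (simp add: v_def)
  qed
  have 4: "\<forall>r. (?X + 1, r) \<in> encW P Q \<longrightarrow> po (?X + 1, r) \<noteq> ppP P"
  proof (intro allI impI)
    fix r assume r: "(?X + 1, r) \<in> encW P Q"
    then have "(?x, r - (?a - b2)) \<in> chi Q" using W by (simp add: mem_shift2 v_def)
    then have "r - (?a - b2) \<in> BR Q" by (simp add: BR_def)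
    then have "po (?x, r - (?a - b2)) = (\<not> ppP P)" using BR_par[OF Bo] by simp
    moreover have "tr v (?x, r - (?a - b2)) = (?X + 1, r)" by (simp add: v_def tr_def)
    ultimately show "po (?X + 1, r) \<noteq> ppP P" using po_tr[OF ev] by metis
  qed
  have 3: "\<exists>r. ?a < r \<and> (?X + 1, r) \<in> encW P Q \<and> po (?X + 1, r) \<noteq> ppP P"
  proof -
    have "tr v (?x, ?b) = (?X+1, ?a + (?b - b2))" by (simp add: v_def tr_def)
    then have "(?X+1, ?a + (?b - b2)) \<in> encW P Q" using W bR_mem[OF hQ] by (metis tr_mem_shift)
    moreover have "?a < ?a + (?b - b2)" using b2lt by simp
    ultimately show ?thesis using 4 by blast
  qed
  show ?thesis using ev W 1 2 3 4 by blast
qed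

lemma colx: "kind P Q \<ge> 5 \<Longrightarrow> (minc Q, r) \<in> chi Q \<Longrightarrow> r = bR Q"
proof -
  assume k: "kind P Q \<ge> 5" and r: "(minc Q, r) \<in> chi Q"
  then have "r \<in> BR Q" by (simp add: BR_def)
  then show ?thesis using BR_single[OF k] by simp
qed

lemma nbr_right: "kind P Q \<ge> 5 \<Longrightarrow> (minc Q + 1, bR Q) \<in> chi Q"
proof -
  assume k: "kind P Q \<ge> 5"
  obtain e where e: "e \<in> chi Q" "badj (minc Q, bR Q) e"
    using bpoly_card2_nbr[OF R_poly[OF hQ] hQ(2) bR_mem[OF hQ]] by blast
  have ge: "minc Q \<le> fst e" using R_ge[OF hQ e(1)] .
  have "fst e \<noteq> minc Q"
  proof
    assume "fst e = minc Q"
    then have "(minc Q, snd e) \<in> chi Q" using e(1) by (metis prod.collapse)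
    then have "snd e = bR Q" using colx[OF k] by blast
    then show False using e(2) \<open>fst e = minc Q\<close> by (auto simp: badj_def)
  qed
  then have "e = (minc Q + 1, bR Q)" using e(2) ge by (cases e) (auto simp: badj_def)
  then show ?thesis using e(1) by simp
qed

lemma not_col_lt: "kind P Q \<ge> 5 \<Longrightarrow> c \<in> chi Q \<Longrightarrow> c \<noteq> (minc Q, bR Q) \<Longrightarrow> minc Q < fst c"
proof -
  assume k: "kind P Q \<ge> 5" and c: "c \<in> chi Q" "c \<noteq> (minc Q, bR Q)"
  have "minc Q \<le> fst c" using R_ge[OF hQ c(1)] .
  moreover have "fst c \<noteq> minc Q"
  proof
    assume "fst c = minc Q"
    then have "(minc Q, snd c) \<in> chi Q" using c(1) by (metis prod.collapse)
    then have "snd c = bR Q" using colx[OF k] by blast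
    then show False using c(2) \<open>fst c = minc Q\<close> by (metis prod.collapse)
  qed
  ultimately show ?thesis by simp
qed

lemma k5:
  assumes "kind P Q = 5"
  shows "\<exists>v. evv v \<and> encW P Q = shift v (chi Q) \<and> (maxc P, aP P + 1) \<in> encW P Q \<and>
     (maxc P + 1, aP P + 1) \<in> encW P Q \<and>
     (\<forall>c\<in>encW P Q. c \<noteq> (maxc P, aP P + 1) \<longrightarrow> maxc P < fst c) \<and> po (maxc P, aP P)"
proof -
  let ?x = "minc Q" and ?X = "maxc P" and ?a = "aP P" and ?b = "bR Q"
  have k: "kind P Q \<ge> 5" using assms by simp
  have Bo: "Bo P Q = {}" using kf2 assms by simp
  have pp: "ppP P" using kf9[OF assms] .
  have bp: "po (?x, ?b) = (\<not> ppP P)" using BR_par[OF Bo bR_in[OF hQ]] .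
  define v where "v = (?X - ?x, ?a + 1 - ?b)"
  have ev: "evv v" unfolding v_def
    using evv_po[of "(?x,?b)" "(?X, ?a + 1)"] bp po_up[of ?X ?a] by (simp add: ppP_def)
  have W: "encW P Q = shift v (chi Q)" using assms by (simp add: encW_def place_def v_def)
  have 1: "(?X, ?a + 1) \<in> encW P Q"
  proof -
    have "tr v (?x, ?b) = (?X, ?a + 1)" by (simp add: v_def tr_def)
    then show ?thesis using W bR_mem[OF hQ] by (metis tr_mem_shift)
  qed
  have 2: "(?X + 1, ?a + 1) \<in> encW P Q"
  proof -
    have "tr v (?x + 1, ?b) = (?X + 1, ?a + 1)" by (simp add: v_def tr_def)
    then show ?thesis using W nbr_right[OF k] by (metis tr_mem_shift)
  qed
  have 3: "\<forall>c\<in>encW P Q. c \<noteq> (?X, ?a + 1) \<longrightarrow> ?X < fst c"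
  proof (intro ballI impI)
    fix c assume c: "c \<in> encW P Q" "c \<noteq> (?X, ?a + 1)"
    then obtain c0 where c0: "c0 \<in> chi Q" "c = tr v c0" using W by (auto simp: shift_def)
    have "c0 \<noteq> (?x, ?b)" using c0(2) c(2) by (auto simp: v_def tr_def)
    then have "?x < fst c0" using not_col_lt[OF k c0(1)] by blast
    then show "?X < fst c" using c0(2) by (simp add: v_def)
  qed
  have pp': "po (?X, ?a) = ppP P" by (simp add: ppP_def)
  show ?thesis using ev W 1 2 3 pp pp' by metis
qed

lemma k6:
  assumes "kind P Q = 6"
  shows "\<exists>v. evv v \<and> encW P Q = shift v (chi Q) \<and> (maxc P, aP P + 1) \<in> encW P Q \<and>
     (maxc P + 1, aP P) \<in> encW P Q \<and>
     (\<forall>c\<in>encW P Q. c \<noteq> (maxc P, aP P + 1) \<longrightarrow> maxc P < fst c) \<and> \<not> po (maxc P, aP P)"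
proof -
  let ?x = "minc Q" and ?X = "maxc P" and ?a = "aP P" and ?b = "bR Q"
  have k: "kind P Q \<ge> 5" using assms by simp
  have Bo: "Bo P Q = {}" using kf2 assms by simp
  have pp: "\<not> ppP P" using kf10 assms by simp
  have bp: "po (?x, ?b) = (\<not> ppP P)" using BR_par[OF Bo bR_in[OF hQ]] .
  define v where "v = (?X - ?x, ?a + 1 - ?b)"
  have ev: "evv v" unfolding v_def
    using evv_po[of "(?x,?b)" "(?X, ?a + 1)"] bp po_up[of ?X ?a] by (simp add: ppP_def)
  have W: "encW P Q = shift v (chi Q)" using assms by (simp add: encW_def place_def v_def)
  have 1: "(?X, ?a + 1) \<in> encW P Q"
  proof -
    have "tr v (?x, ?b) = (?X, ?a + 1)" by (simp add: v_def tr_def)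
    then show ?thesis using W bR_mem[OF hQ] by (metis tr_mem_shift)
  qed
  have 2: "(?X + 1, ?a) \<in> encW P Q"
  proof -
    have "tr v (?x + 1, ?b - 1) = (?X + 1, ?a)" by (simp add: v_def tr_def)
    then show ?thesis using W kf11[OF assms] by (metis tr_mem_shift)
  qed
  have 3: "\<forall>c\<in>encW P Q. c \<noteq> (?X, ?a + 1) \<longrightarrow> ?X < fst c"
  proof (intro ballI impI)
    fix c assume c: "c \<in> encW P Q" "c \<noteq> (?X, ?a + 1)"
    then obtain c0 where c0: "c0 \<in> chi Q" "c = tr v c0" using W by (auto simp: shift_def)
    have "c0 \<noteq> (?x, ?b)" using c0(2) c(2) by (auto simp: v_def tr_def)
    then have "?x < fst c0" using not_col_lt[OF k c0(1)] by blast
    then show "?X < fst c" using c0(2) by (simp add: v_def)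
  qed
  have pp': "po (?X, ?a) = ppP P" by (simp add: ppP_def)
  show ?thesis using ev W 1 2 3 pp pp' by metis
qed

lemma k8:
  assumes "kind P Q = 8"
  shows "\<exists>v. evv v \<and> encW P Q = shift v (chi Q) \<and> (maxc P, aP P - 1) \<in> encW P Q \<and>
     (maxc P + 1, aP P) \<notin> encW P Q \<and>
     (\<forall>c\<in>encW P Q. c \<noteq> (maxc P, aP P - 1) \<longrightarrow> maxc P < fst c) \<and> \<not> po (maxc P, aP P)"
proof -
  let ?x = "minc Q" and ?X = "maxc P" and ?a = "aP P" and ?b = "bR Q"
  have k: "kind P Q \<ge> 5" using assms by simp
  have Bo: "Bo P Q = {}" using kf2 assms by simp
  have pp: "\<not> ppP P" using kf10 assms by simp
  have bp: "po (?x, ?b) = (\<not> ppP P)" using BR_par[OF Bo bR_in[OF hQ]] .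
  define v where "v = (?X - ?x, ?a - 1 - ?b)"
  have ev: "evv v" unfolding v_def
    using evv_po[of "(?x,?b)" "(?X, ?a - 1)"] bp po_down[of ?X ?a] by (simp add: ppP_def)
  have W: "encW P Q = shift v (chi Q)" using assms by (simp add: encW_def place_def v_def)
  have 1: "(?X, ?a - 1) \<in> encW P Q"
  proof -
    have "tr v (?x, ?b) = (?X, ?a - 1)" by (simp add: v_def tr_def)
    then show ?thesis using W bR_mem[OF hQ] by (metis tr_mem_shift)
  qed
  have 2: "(?X + 1, ?a) \<notin> encW P Q"
  proof
    assume "(?X + 1, ?a) \<in> encW P Q"
    then have "(?x + 1, ?b + 1) \<in> chi Q" using W by (simp add: mem_shift2 v_def add.commute)
    then show False using kf14[OF assms] by simp
  qed
  have 3: "\<forall>c\<in>encW P Q. c \<noteq> (?X, ?a - 1) \<longrightarrow> ?X < fst c"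
  proof (intro ballI impI)
    fix c assume c: "c \<in> encW P Q" "c \<noteq> (?X, ?a - 1)"
    then obtain c0 where c0: "c0 \<in> chi Q" "c = tr v c0" using W by (auto simp: shift_def)
    have "c0 \<noteq> (?x, ?b)" using c0(2) c(2) by (auto simp: v_def tr_def)
    then have "?x < fst c0" using not_col_lt[OF k c0(1)] by blast
    then show "?X < fst c" using c0(2) by (simp add: v_def)
  qed
  have pp': "po (?X, ?a) = ppP P" by (simp add: ppP_def)
  show ?thesis using ev W 1 2 3 pp pp' by metis
qed

lemma Rst_poly: "kind P Q = 7 \<Longrightarrow> bpoly m (Rst (chi Q) (minc Q) (bR Q))"
proof -
  let ?x = "minc Q" and ?b = "bR Q"
  assume k7: "kind P Q = 7"
  have k: "kind P Q \<ge> 5" using k7 by simp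
  have Bo: "Bo P Q = {}" using kf2 k7 by simp
  have pp: "\<not> ppP P" using kf10 k7 by simp
  have R: "bpoly m (chi Q)" using R_poly[OF hQ] .
  have Rf: "finite (chi Q)" "card (chi Q) = m" "bconn (chi Q)" using R by (auto simp: bpoly_def)
  have q: "(?x, ?b) \<in> chi Q" using bR_mem[OF hQ] .
  have n: "(?x + 1, ?b) \<in> chi Q" using nbr_right[OF k] .
  have new: "(?x + 1, ?b - 1) \<notin> chi Q" using kf12 k7 by simp
  have leaf: "\<And>d. d \<in> chi Q \<Longrightarrow> badj (?x, ?b) d \<Longrightarrow> d = (?x + 1, ?b)"
  proof -
    fix d assume d: "d \<in> chi Q" "badj (?x, ?b) d"
    have ge: "?x \<le> fst d" using R_ge[OF hQ d(1)] .
    have "fst d \<noteq> ?x"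
    proof
      assume "fst d = ?x"
      then have "(?x, snd d) \<in> chi Q" using d(1) by (metis prod.collapse)
      then have "snd d = ?b" using colx[OF k] by blast
      then show False using d(2) \<open>fst d = ?x\<close> by (auto simp: badj_def)
    qed
    then show "d = (?x + 1, ?b)" using d(2) ge by (cases d) (auto simp: badj_def)
  qed
  have c1: "bconn (chi Q - {(?x, ?b)})"
    by (rule bconn_leaf[OF Rf(3) n _ leaf]) auto
  have bp: "po (?x, ?b) = (\<not> ppP P)" using BR_par[OF Bo bR_in[OF hQ]] .
  have pnew: "po (?x + 1, ?b - 1)" using bp pp po_diag[of ?x ?b] by simp
  have adj: "badj (?x + 1, ?b) (?x + 1, ?b - 1)" using pnew by (simp add: badj_def)
  have c2: "bconn ((chi Q - {(?x, ?b)}) \<union> {(?x + 1, ?b - 1)})"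
    by (rule bconn_union[OF c1 bconn_single _ _ adj]) (use n in auto)
  have eq: "Rst (chi Q) ?x ?b = (chi Q - {(?x, ?b)}) \<union> {(?x + 1, ?b - 1)}"
    by (auto simp: Rst_def)
  have card: "card (Rst (chi Q) ?x ?b) = m"
  proof -
    have "card (chi Q - {(?x, ?b)}) = m - 1" using Rf q by (simp add: card_Diff_singleton)
    moreover have "(?x + 1, ?b - 1) \<notin> chi Q - {(?x, ?b)}" using new by simp
    ultimately have "card (insert (?x + 1, ?b - 1) (chi Q - {(?x, ?b)})) = m - 1 + 1"
      using Rf(1) by simp
    then show ?thesis using hQ(2) by (simp add: Rst_def)
  qed
  show ?thesis using c2 eq card Rf(1) by (simp add: bpoly_def Rst_def)
qed

lemma k7:
  assumes "kind P Q = 7"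
  shows "\<exists>v. evv v \<and> encW P Q = shift v (Rst (chi Q) (minc Q) (bR Q)) \<and>
     (maxc P + 1, aP P) \<in> encW P Q \<and> (\<forall>c\<in>encW P Q. maxc P < fst c) \<and>
     (maxc P + 1, aP P + 2) \<in> encW P Q \<and> po (maxc P + 1, aP P + 2) \<noteq> ppP P \<and>
     (maxc P + 1, aP P + 1) \<in> encW P Q \<and> po (maxc P + 1, aP P + 1) = ppP P \<and>
     shift v (chi Q) = insert (maxc P, aP P + 1) (encW P Q - {(maxc P + 1, aP P)})"
proof -
  let ?x = "minc Q" and ?X = "maxc P" and ?a = "aP P" and ?b = "bR Q"
  let ?R = "Rst (chi Q) ?x ?b"
  have k: "kind P Q \<ge> 5" using assms by simp
  have Bo: "Bo P Q = {}" using kf2 assms by simp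
  have pp: "\<not> ppP P" using kf10 assms by simp
  have bp: "po (?x, ?b) = (\<not> ppP P)" using BR_par[OF Bo bR_in[OF hQ]] .
  have new: "(?x + 1, ?b - 1) \<notin> chi Q" using kf12 assms by simp
  define v where "v = (?X + 1 - (?x + 1), ?a - (?b - 1))"
  have ev: "evv v" unfolding v_def
    using evv_po[of "(?x + 1, ?b - 1)" "(?X + 1, ?a)"] bp ppflip po_diag[of ?x ?b] by simp
  have W: "encW P Q = shift v ?R" using assms by (simp add: encW_def place_def v_def)
  have trq: "tr v (?x, ?b) = (?X, ?a + 1)" by (simp add: v_def tr_def)
  have trn: "tr v (?x + 1, ?b - 1) = (?X + 1, ?a)" by (simp add: v_def tr_def)
  have 1: "(?X + 1, ?a) \<in> encW P Q" using W trn by (metis Rst_def insertI1 tr_mem_shift)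
  have 2: "\<forall>c\<in>encW P Q. ?X < fst c"
  proof
    fix c assume "c \<in> encW P Q"
    then obtain c0 where c0: "c0 \<in> ?R" "c = tr v c0" using W by (auto simp: shift_def)
    have "?x < fst c0"
    proof (cases "c0 = (?x + 1, ?b - 1)")
      case True then show ?thesis by simp
    next
      case False
      then have "c0 \<in> chi Q" "c0 \<noteq> (?x, ?b)" using c0(1) by (auto simp: Rst_def)
      then show ?thesis using not_col_lt[OF k] by blast
    qed
    then show "?X < fst c" using c0(2) by (simp add: v_def)
  qed
  have 3: "(?X + 1, ?a + 2) \<in> encW P Q"
  proof -
    have "(?x + 1, ?b + 1) \<in> ?R" using kf13[OF assms] by (simp add: Rst_def)
    moreover have "tr v (?x + 1, ?b + 1) = (?X + 1, ?a + 2)" by (simp add: v_def tr_def)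
    ultimately show ?thesis using W by (metis tr_mem_shift)
  qed
  have 4: "(?X + 1, ?a + 1) \<in> encW P Q"
  proof -
    have "(?x + 1, ?b) \<in> ?R" using nbr_right[OF k] by (simp add: Rst_def)
    moreover have "tr v (?x + 1, ?b) = (?X + 1, ?a + 1)" by (simp add: v_def tr_def)
    ultimately show ?thesis using W by (metis tr_mem_shift)
  qed
  have p4: "po (?X + 1, ?a + 1) = ppP P" using ppflip po_up[of "?X + 1" ?a] by simp
  have p3: "po (?X + 1, ?a + 2) \<noteq> ppP P"
    using p4 po_up[of "?X + 1" "?a + 1"] by (simp add: add.assoc)
  have 5: "shift v (chi Q) = insert (?X, ?a + 1) (encW P Q - {(?X + 1, ?a)})"
  proof -
    have "chi Q = insert (?x, ?b) (?R - {(?x + 1, ?b - 1)})"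
      using bR_mem[OF hQ] new by (auto simp: Rst_def)
    then have "shift v (chi Q) = shift v (insert (?x, ?b) (?R - {(?x + 1, ?b - 1)}))"
      by (rule arg_cong)
    also have "\<dots> = insert (tr v (?x, ?b)) (shift v ?R - {tr v (?x + 1, ?b - 1)})"
      by (simp only: shift_insert shift_diff shift_insert shift_empty)
    finally show ?thesis using W trq trn by simp
  qed
  show ?thesis using ev W 1 2 3 4 p3 p4 5 by blast
qed

end

definition cnt :: "pt set \<Rightarrow> int \<Rightarrow> nat" where "cnt U k = card {c\<in>U. fst c \<le> k}"
definition sel :: "pt set \<Rightarrow> int \<Rightarrow> int \<Rightarrow> pt" where
  "sel U X r = (if po (X,r) \<and> (X+1, r+1) \<notin> U then (X, r+1) else (X, r))"

context
  fixes P Q :: "pt set" and l m :: nat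
  assumes hP: "bpoly l P" "1 \<le> l" and hQ: "bpoly m Q" "2 \<le> m"
begin

lemma Rst_poly': "kind P Q = 7 \<Longrightarrow> bpoly m (Rst (chi Q) (minc Q) (bR Q))"
  using Rst_poly[OF hP hQ] .

lemma W_props:
  "bpoly m (encW P Q) \<and> P \<inter> encW P Q = {} \<and> (\<exists>p\<in>P. \<exists>w\<in>encW P Q. badj p w)"
proof -
  let ?X = "maxc P" and ?a = "aP P" and ?W = "encW P Q"
  have aP: "(?X, ?a) \<in> P" using a_mem[OF hP] .
  have Ple: "\<And>c. c \<in> P \<Longrightarrow> fst c \<le> ?X" using P_le[OF hP] .
  have disjL1: "P \<inter> ?W = {}" if "\<forall>c\<in>?W. ?X < fst c"
  proof -
    { fix c assume "c \<in> P" "c \<in> ?W"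
      then have False using that Ple[of c] by fastforce }
    then show ?thesis by blast
  qed
  have disjL2: "P \<inter> ?W = {}" if k4: "kind P Q \<ge> 4" and q: "\<forall>c\<in>?W. c \<noteq> (?X, r) \<longrightarrow> ?X < fst c"
     and r: "r \<noteq> ?a" for r
  proof -
    have A: "AP P = {?a}" using A_single[OF hP hQ k4] .
    { fix c assume c: "c \<in> P" "c \<in> ?W"
      have False
      proof (cases "c = (?X, r)")
        case True
        then have "r \<in> AP P" using c(1) by (simp add: AP_def)
        then show False using A r by simp
      next
        case False then show False using q c Ple[of c] by fastforce
      qed }
    then show ?thesis by blast
  qed
  have "kind P Q \<in> {1,2,3,4,5,6,7,8}" by (rule kind_range)
  then consider "kind P Q = 1" | "kind P Q = 2" | "kind P Q = 3" | "kind P Q = 4"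
    | "kind P Q = 5" | "kind P Q = 6" | "kind P Q = 7" | "kind P Q = 8" by blast
  then show ?thesis
  proof cases
    case 1
    then obtain v where v: "evv v" "?W = shift v Q" "(?X + 1, ?a) \<in> ?W" "\<forall>c\<in>?W. ?X < fst c"
      using k1[OF hP hQ] by blast
    have "bpoly m ?W" using v(1,2) hQ(1) by simp
    then show ?thesis using disjL1[OF v(4)] aP v(3) badj_right by blast
  next
    case 2
    then obtain v a' where v: "evv v" "?W = shift v Q" "(?X, a') \<in> P" "(?X + 1, a') \<in> ?W"
       "\<forall>c\<in>?W. ?X < fst c"
      using k2[OF hP hQ] by blast
    have "bpoly m ?W" using v(1,2) hQ(1) by simp
    then show ?thesis using disjL1[OF v(5)] v(3,4) badj_right by blast
  next
    case 3
    then obtain v a2 where v: "evv v" "?W = shift v (chi Q)" "(?X, a2) \<in> P" "(?X + 1, a2) \<in> ?W"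
       "\<forall>c\<in>?W. ?X < fst c"
      using k3[OF hP hQ] by blast
    have "bpoly m ?W" using v(1,2) hQ(1) by simp
    then show ?thesis using disjL1[OF v(5)] v(3,4) badj_right by blast
  next
    case 4
    then obtain v where v: "evv v" "?W = shift v (chi Q)" "(?X + 1, ?a) \<in> ?W" "\<forall>c\<in>?W. ?X < fst c"
      using k4[OF hP hQ] by blast
    have "bpoly m ?W" using v(1,2) hQ(1) by simp
    then show ?thesis using disjL1[OF v(4)] aP v(3) badj_right by blast
  next
    case 5
    then obtain v where v: "evv v" "?W = shift v (chi Q)" "(?X, ?a + 1) \<in> ?W"
      "\<forall>c\<in>?W. c \<noteq> (?X, ?a + 1) \<longrightarrow> ?X < fst c" "po (?X, ?a)"
      using k5[OF hP hQ] by blast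
    have "bpoly m ?W" using v(1,2) hQ(1) by simp
    moreover have "P \<inter> ?W = {}" using disjL2[of "?a + 1"] 5 v(4) by simp
    moreover have "badj (?X, ?a) (?X, ?a + 1)" using v(5) by (rule badj_upI)
    ultimately show ?thesis using aP v(3) by blast
  next
    case 6
    then obtain v where v: "evv v" "?W = shift v (chi Q)" "(?X + 1, ?a) \<in> ?W"
      "\<forall>c\<in>?W. c \<noteq> (?X, ?a + 1) \<longrightarrow> ?X < fst c"
      using k6[OF hP hQ] by blast
    have "bpoly m ?W" using v(1,2) hQ(1) by simp
    moreover have "P \<inter> ?W = {}" using disjL2[of "?a + 1"] 6 v(4) by simp
    ultimately show ?thesis using aP v(3) badj_right by blast
  next
    case 7
    then obtain v where v: "evv v" "?W = shift v (Rst (chi Q) (minc Q) (bR Q))"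
      "(?X + 1, ?a) \<in> ?W" "\<forall>c\<in>?W. ?X < fst c"
      using k7[OF hP hQ] by blast
    have "bpoly m ?W" using v(1,2) Rst_poly'[OF 7] by simp
    then show ?thesis using disjL1[OF v(4)] aP v(3) badj_right by blast
  next
    case 8
    then obtain v where v: "evv v" "?W = shift v (chi Q)" "(?X, ?a - 1) \<in> ?W"
      "\<forall>c\<in>?W. c \<noteq> (?X, ?a - 1) \<longrightarrow> ?X < fst c" "\<not> po (?X, ?a)"
      using k8[OF hP hQ] by blast
    have "bpoly m ?W" using v(1,2) hQ(1) by simp
    moreover have "P \<inter> ?W = {}" using disjL2[of "?a - 1"] 8 v(4) by simp
    moreover have "badj (?X, ?a) (?X, ?a - 1)"
      using v(5) po_down[of ?X ?a] by (simp add: badj_def)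
    ultimately show ?thesis using aP v(3) by blast
  qed
qed

lemma enc_poly: "bpoly (l + m) (enc P Q)"
proof -
  have W: "bpoly m (encW P Q)" "P \<inter> encW P Q = {}" "\<exists>p\<in>P. \<exists>w\<in>encW P Q. badj p w"
    using W_props by auto
  obtain p w where pw: "p \<in> P" "w \<in> encW P Q" "badj p w" using W(3) by blast
  have P': "finite P" "card P = l" "bconn P" using hP by (auto simp: bpoly_def)
  have W': "finite (encW P Q)" "card (encW P Q) = m" "bconn (encW P Q)" using W(1) by (auto simp: bpoly_def)
  have "bconn (P \<union> encW P Q)" using bconn_union[OF P'(3) W'(3) pw] .
  moreover have "card (P \<union> encW P Q) = l + m" using card_Un_disjoint[OF P'(1) W'(1) W(2)] P'(2) W'(2) by simp
  ultimately show ?thesis using P'(1) W'(1) by (simp add: bpoly_def enc_def)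
qed

lemma split_L1:
  assumes "\<forall>c\<in>encW P Q. maxc P < fst c"
  shows "cnt (enc P Q) (maxc P) = l \<and> cnt (enc P Q) (maxc P - 1) < l \<and>
         {c \<in> enc P Q. fst c \<le> maxc P} = P"
proof -
  let ?X = "maxc P" and ?a = "aP P" and ?U = "enc P Q"
  have Ple: "\<And>c. c \<in> P \<Longrightarrow> fst c \<le> ?X" using P_le[OF hP] .
  have Pf: "finite P" "card P = l" using hP by (auto simp: bpoly_def)
  have 1: "{c \<in> ?U. fst c \<le> ?X} = P"
  proof
    show "{c \<in> ?U. fst c \<le> ?X} \<subseteq> P" using assms by (auto simp: enc_def)
    show "P \<subseteq> {c \<in> ?U. fst c \<le> ?X}" using Ple by (auto simp: enc_def)
  qed
  have 2: "{c \<in> ?U. fst c \<le> ?X - 1} \<subseteq> P - {(?X, ?a)}"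
    using assms by (auto simp: enc_def)
  have "card (P - {(?X, ?a)}) = l - 1" using Pf a_mem[OF hP] by (simp add: card_Diff_singleton)
  then have "cnt ?U (?X - 1) \<le> l - 1"
    using card_mono[OF _ 2] Pf(1) by (simp add: cnt_def)
  then show ?thesis using 1 Pf(2) hP(2) by (simp add: cnt_def)
qed

lemma split_L2:
  assumes k: "kind P Q \<ge> 4" and q: "q \<in> encW P Q" "fst q = maxc P" "snd q \<noteq> aP P"
    and rest: "\<forall>c\<in>encW P Q. c \<noteq> q \<longrightarrow> maxc P < fst c"
  shows "cnt (enc P Q) (maxc P - 1) = l - 1 \<and> cnt (enc P Q) (maxc P) = l + 1 \<and>
         {c \<in> enc P Q. fst c = maxc P} = {(maxc P, aP P), q} \<and>
         {c \<in> enc P Q. fst c < maxc P} = P - {(maxc P, aP P)}"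
proof -
  let ?X = "maxc P" and ?a = "aP P" and ?U = "enc P Q"
  have Ple: "\<And>c. c \<in> P \<Longrightarrow> fst c \<le> ?X" using P_le[OF hP] .
  have Pf: "finite P" "card P = l" using hP by (auto simp: bpoly_def)
  have A: "AP P = {?a}" using A_single[OF hP hQ k] .
  have colP: "\<And>c. c \<in> P \<Longrightarrow> fst c = ?X \<Longrightarrow> c = (?X, ?a)"
  proof -
    fix c assume "c \<in> P" "fst c = ?X"
    then have "snd c \<in> AP P" by (simp add: AP_def) (metis prod.collapse)
    then show "c = (?X, ?a)" using A \<open>fst c = ?X\<close> by (metis prod.collapse singletonD)
  qed
  have qP: "q \<notin> P"
  proof
    assume "q \<in> P"
    then have "q = (?X, ?a)" using colP q(2) by blast
    then show False using q(3) by simp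
  qed
  have aP: "(?X, ?a) \<in> P" using a_mem[OF hP] .
  have 1: "{c \<in> ?U. fst c < ?X} = P - {(?X, ?a)}"
  proof
    show "{c \<in> ?U. fst c < ?X} \<subseteq> P - {(?X, ?a)}"
    proof
      fix c assume c: "c \<in> {c \<in> ?U. fst c < ?X}"
      then have "c \<in> P"
      proof (cases "c \<in> P")
        case False
        then have "c \<in> encW P Q" using c by (simp add: enc_def)
        then show ?thesis using rest q(2) c by fastforce
      qed simp
      then show "c \<in> P - {(?X, ?a)}" using c by auto
    qed
  next
    show "P - {(?X, ?a)} \<subseteq> {c \<in> ?U. fst c < ?X}"
    proof
      fix c assume c: "c \<in> P - {(?X, ?a)}"
      then have "fst c \<le> ?X" using Ple by blast
      moreover have "fst c \<noteq> ?X"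
      proof
        assume "fst c = ?X"
        then have "c = (?X, ?a)" using colP c by blast
        then show False using c by simp
      qed
      ultimately have "fst c < ?X" by simp
      then show "c \<in> {c \<in> ?U. fst c < ?X}" using c by (simp add: enc_def)
    qed
  qed
  have 2: "{c \<in> ?U. fst c = ?X} = {(?X, ?a), q}"
  proof
    show "{c \<in> ?U. fst c = ?X} \<subseteq> {(?X, ?a), q}"
    proof
      fix c assume c: "c \<in> {c \<in> ?U. fst c = ?X}"
      show "c \<in> {(?X, ?a), q}"
      proof (cases "c \<in> P")
        case True then show ?thesis using colP c by auto
      next
        case False
        then have "c \<in> encW P Q" using c by (simp add: enc_def)
        then show ?thesis using rest c by fastforce
      qed
    qed
    show "{(?X, ?a), q} \<subseteq> {c \<in> ?U. fst c = ?X}" using aP q by (auto simp: enc_def)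
  qed
  have 3: "{c \<in> ?U. fst c \<le> ?X - 1} = P - {(?X, ?a)}"
    using 1 by (metis (no_types, lifting) Collect_cong zle_diff1_eq)
  have 4: "{c \<in> ?U. fst c \<le> ?X} = insert q P"
  proof
    show "{c \<in> ?U. fst c \<le> ?X} \<subseteq> insert q P"
      using rest by (auto simp: enc_def)
    show "insert q P \<subseteq> {c \<in> ?U. fst c \<le> ?X}" using Ple q by (auto simp: enc_def)
  qed
  have "card (P - {(?X, ?a)}) = l - 1" using Pf aP by (simp add: card_Diff_singleton)
  moreover have "card (insert q P) = l + 1" using Pf qP by simp
  ultimately show ?thesis using 1 2 3 4 by (simp add: cnt_def)
qed

lemma enc_split:
  "(cnt (enc P Q) (maxc P) = l \<and> cnt (enc P Q) (maxc P - 1) < l \<and> {c \<in> enc P Q. fst c \<le> maxc P} = P) \<or>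
   (cnt (enc P Q) (maxc P - 1) = l - 1 \<and> cnt (enc P Q) (maxc P) = l + 1 \<and>
    (\<exists>r. {c \<in> enc P Q. fst c = maxc P} = {(maxc P, r), (maxc P, r + 1)} \<and>
         {c \<in> enc P Q. fst c < maxc P} \<union> {sel (enc P Q) (maxc P) r} = P))"
proof -
  let ?X = "maxc P" and ?a = "aP P" and ?U = "enc P Q" and ?W = "encW P Q"
  have aP: "(?X, ?a) \<in> P" using a_mem[OF hP] .
  have "kind P Q \<in> {1,2,3,4,5,6,7,8}" by (rule kind_range)
  then consider "kind P Q \<in> {1,2,3,4,7}" | "kind P Q = 5" | "kind P Q = 6" | "kind P Q = 8" by blast
  then show ?thesis
  proof cases
    case 1
    have "\<forall>c\<in>?W. ?X < fst c"
      using 1 k1[OF hP hQ] k2[OF hP hQ] k3[OF hP hQ] k4[OF hP hQ] k7[OF hP hQ] by auto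
    then show ?thesis using split_L1 by blast
  next
    case 2
    then obtain v where v: "(?X, ?a + 1) \<in> ?W" "(?X + 1, ?a + 1) \<in> ?W"
      "\<forall>c\<in>?W. c \<noteq> (?X, ?a + 1) \<longrightarrow> ?X < fst c" "po (?X, ?a)"
      using k5[OF hP hQ] by blast
    have S: "cnt ?U (?X - 1) = l - 1 \<and> cnt ?U ?X = l + 1 \<and> {c \<in> ?U. fst c = ?X} = {(?X, ?a), (?X, ?a + 1)} \<and>
         {c \<in> ?U. fst c < ?X} = P - {(?X, ?a)}"
      using split_L2[of "(?X, ?a + 1)"] 2 v(1,3) by simp
    have sl: "sel ?U ?X ?a = (?X, ?a)" using v(2,4) by (simp add: sel_def enc_def)
    have S1: "{c \<in> ?U. fst c < ?X} = P - {(?X, ?a)}" using S by blast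
    have S2: "{c \<in> ?U. fst c = ?X} = {(?X, ?a), (?X, ?a + 1)}" using S by blast
    have S3: "{c \<in> ?U. fst c < ?X} \<union> {sel ?U ?X ?a} = P" unfolding S1 sl using aP by auto
    have E: "\<exists>r. {c \<in> ?U. fst c = ?X} = {(?X, r), (?X, r + 1)} \<and>
         {c \<in> ?U. fst c < ?X} \<union> {sel ?U ?X r} = P" using S2 S3 by blast
    show ?thesis using S E by blast
  next
    case 3
    then obtain v where v: "(?X, ?a + 1) \<in> ?W"
      "\<forall>c\<in>?W. c \<noteq> (?X, ?a + 1) \<longrightarrow> ?X < fst c" "\<not> po (?X, ?a)"
      using k6[OF hP hQ] by blast
    have S: "cnt ?U (?X - 1) = l - 1 \<and> cnt ?U ?X = l + 1 \<and> {c \<in> ?U. fst c = ?X} = {(?X, ?a), (?X, ?a + 1)} \<and>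
         {c \<in> ?U. fst c < ?X} = P - {(?X, ?a)}"
      using split_L2[of "(?X, ?a + 1)"] 3 v(1,2) by simp
    have sl: "sel ?U ?X ?a = (?X, ?a)" using v(3) by (simp add: sel_def)
    have S1: "{c \<in> ?U. fst c < ?X} = P - {(?X, ?a)}" using S by blast
    have S2: "{c \<in> ?U. fst c = ?X} = {(?X, ?a), (?X, ?a + 1)}" using S by blast
    have S3: "{c \<in> ?U. fst c < ?X} \<union> {sel ?U ?X ?a} = P" unfolding S1 sl using aP by auto
    have E: "\<exists>r. {c \<in> ?U. fst c = ?X} = {(?X, r), (?X, r + 1)} \<and>
         {c \<in> ?U. fst c < ?X} \<union> {sel ?U ?X r} = P" using S2 S3 by blast
    show ?thesis using S E by blast
  next
    case 4
    then obtain v where v: "(?X, ?a - 1) \<in> ?W" "(?X + 1, ?a) \<notin> ?W"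
      "\<forall>c\<in>?W. c \<noteq> (?X, ?a - 1) \<longrightarrow> ?X < fst c" "\<not> po (?X, ?a)"
      using k8[OF hP hQ] by blast
    have S: "cnt ?U (?X - 1) = l - 1 \<and> cnt ?U ?X = l + 1 \<and> {c \<in> ?U. fst c = ?X} = {(?X, ?a), (?X, ?a - 1)} \<and>
         {c \<in> ?U. fst c < ?X} = P - {(?X, ?a)}"
      using split_L2[of "(?X, ?a - 1)"] 4 v(1,3) by simp
    have nP: "(?X + 1, ?a) \<notin> P" using P_le[OF hP, of "(?X + 1, ?a)"] by auto
    have "po (?X, ?a - 1)" using v(4) po_down[of ?X ?a] by simp
    then have sl: "sel ?U ?X (?a - 1) = (?X, ?a)" using v(2) nP by (simp add: sel_def enc_def)
    have e: "{(?X, ?a), (?X, ?a - 1)} = {(?X, ?a - 1), (?X, ?a - 1 + 1)}" by (simp add: insert_commute)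
    have S1: "{c \<in> ?U. fst c < ?X} = P - {(?X, ?a)}" using S by blast
    have S2: "{c \<in> ?U. fst c = ?X} = {(?X, ?a - 1), (?X, ?a - 1 + 1)}" using S e by simp
    have S3: "{c \<in> ?U. fst c < ?X} \<union> {sel ?U ?X (?a - 1)} = P" unfolding S1 sl using aP by auto
    have E: "\<exists>r. {c \<in> ?U. fst c = ?X} = {(?X, r), (?X, r + 1)} \<and>
         {c \<in> ?U. fst c < ?X} \<union> {sel ?U ?X r} = P" using S2 S3 by blast
    show ?thesis using S E by blast
  qed
qed

end

definition G1 :: "pt set \<Rightarrow> pt set \<Rightarrow> bool" where
  "G1 P W \<longleftrightarrow> (maxc P + 1, aP P) \<in> W \<and>
     (\<forall>r. aP P < r \<longrightarrow> (maxc P + 1, r) \<in> W \<longrightarrow> po (maxc P + 1, r) = ppP P)"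

definition kindW :: "pt set \<Rightarrow> pt set \<Rightarrow> nat" where
  "kindW P W = (if \<exists>c\<in>W. fst c \<le> maxc P then
       (if ppP P then 5 else if (maxc P, aP P + 1) \<in> W then 6 else 8)
     else if G1 P W then 1 else if Ao P \<noteq> {} then 2 else if 2 \<le> card (AP P) then 3
     else if (\<forall>r. (maxc P + 1, r) \<in> W \<longrightarrow> po (maxc P + 1, r) \<noteq> ppP P) then 4 else 7)"

context
  fixes P Q :: "pt set" and l m :: nat
  assumes hP: "bpoly l P" "1 \<le> l" and hQ: "bpoly m Q" "2 \<le> m"
begin

lemma kindW_enc: "kindW P (encW P Q) = kind P Q"
proof -
  let ?X = "maxc P" and ?a = "aP P" and ?W = "encW P Q"
  have noL2: "\<not> (\<exists>c\<in>?W. fst c \<le> ?X)" if "\<forall>c\<in>?W. ?X < fst c" using that by fastforce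
  have "kind P Q \<in> {1,2,3,4,5,6,7,8}" by (rule kind_range)
  then consider "kind P Q = 1" | "kind P Q = 2" | "kind P Q = 3" | "kind P Q = 4"
    | "kind P Q = 5" | "kind P Q = 6" | "kind P Q = 7" | "kind P Q = 8" by blast
  then show ?thesis
  proof cases
    case 1
    then obtain v where v: "(?X + 1, ?a) \<in> ?W" "\<forall>c\<in>?W. ?X < fst c"
      "\<forall>r. ?a < r \<longrightarrow> (?X + 1, r) \<in> ?W \<longrightarrow> po (?X + 1, r) = ppP P"
      using k1[OF hP hQ] by blast
    have "G1 P ?W" using v(1,3) by (simp add: G1_def)
    then show ?thesis using 1 noL2[OF v(2)] by (simp add: kindW_def)
  next
    case 2
    then obtain v a' where v: "\<forall>c\<in>?W. ?X < fst c"
      "\<forall>r. (?X + 1, r) \<in> ?W \<longrightarrow> po (?X + 1, r) = ppP P"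
      using k2[OF hP hQ] by blast
    have "\<not> G1 P ?W" using v(2) ppflip[OF hP hQ] by (auto simp: G1_def)
    then show ?thesis using 2 noL2[OF v(1)] kf3[OF hP hQ 2] by (simp add: kindW_def)
  next
    case 3
    then obtain v a2 where v: "\<forall>c\<in>?W. ?X < fst c" "(?X + 1, ?a) \<notin> ?W"
      using k3[OF hP hQ] by blast
    have "\<not> G1 P ?W" using v(2) by (simp add: G1_def)
    then show ?thesis using 3 noL2[OF v(1)] kf4[OF hP hQ] kf5[OF hP hQ 3] by (simp add: kindW_def)
  next
    case 4
    then obtain v where v: "\<forall>c\<in>?W. ?X < fst c"
      "\<exists>r. ?a < r \<and> (?X + 1, r) \<in> ?W \<and> po (?X + 1, r) \<noteq> ppP P"
      "\<forall>r. (?X + 1, r) \<in> ?W \<longrightarrow> po (?X + 1, r) \<noteq> ppP P"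
      using k4[OF hP hQ] by blast
    have "\<not> G1 P ?W"
    proof
      assume "G1 P ?W"
      then show False using v(2) unfolding G1_def by force
    qed
    moreover have "\<not> 2 \<le> card (AP P)" using kf6[OF hP hQ] 4 by simp
    ultimately show ?thesis using 4 noL2[OF v(1)] kf4[OF hP hQ] v(3) by (simp add: kindW_def)
  next
    case 5
    then obtain v where v: "(?X, ?a + 1) \<in> ?W" using k5[OF hP hQ] by blast
    have "\<exists>c\<in>?W. fst c \<le> ?X" using v by force
    then show ?thesis using 5 kf9[OF hP hQ 5] by (simp add: kindW_def)
  next
    case 6
    then obtain v where v: "(?X, ?a + 1) \<in> ?W" using k6[OF hP hQ] by blast
    have "\<exists>c\<in>?W. fst c \<le> ?X" using v by force
    then show ?thesis using 6 kf10[OF hP hQ] v by (simp add: kindW_def)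
  next
    case 7
    then obtain v where v: "\<forall>c\<in>?W. ?X < fst c"
      "(?X + 1, ?a + 2) \<in> ?W" "po (?X + 1, ?a + 2) \<noteq> ppP P"
      "(?X + 1, ?a + 1) \<in> ?W" "po (?X + 1, ?a + 1) = ppP P"
      using k7[OF hP hQ] by blast
    have "\<not> G1 P ?W"
    proof
      assume "G1 P ?W"
      then have "po (?X + 1, ?a + 2) = ppP P" using v(2) unfolding G1_def by simp
      then show False using v(3) by simp
    qed
    moreover have "\<not> 2 \<le> card (AP P)" using kf6[OF hP hQ] 7 by simp
    moreover have "\<not> (\<forall>r. (?X + 1, r) \<in> ?W \<longrightarrow> po (?X + 1, r) \<noteq> ppP P)" using v(4,5) by blast
    ultimately show ?thesis using 7 noL2[OF v(1)] kf4[OF hP hQ] by (simp add: kindW_def)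
  next
    case 8
    then obtain v where v: "(?X, ?a - 1) \<in> ?W" "\<forall>c\<in>?W. c \<noteq> (?X, ?a - 1) \<longrightarrow> ?X < fst c"
      using k8[OF hP hQ] by blast
    have "\<exists>c\<in>?W. fst c \<le> ?X" using v by force
    moreover have "(?X, ?a + 1) \<notin> ?W" using v(2) by force
    ultimately show ?thesis using 8 kf10[OF hP hQ] by (simp add: kindW_def)
  qed
qed

lemma enc_shape:
  "(\<exists>v. evv v \<and> encW P Q = shift v Q \<and> kind P Q \<in> {1,2}) \<or>
   (\<exists>v. evv v \<and> encW P Q = shift v (chi Q) \<and> kind P Q \<in> {3,4,5,6,8}) \<or>
   (\<exists>v. evv v \<and> shift v (chi Q) = insert (maxc P, aP P + 1) (encW P Q - {(maxc P + 1, aP P)}) \<and> kind P Q = 7)"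
proof -
  have "kind P Q \<in> {1,2,3,4,5,6,7,8}" by (rule kind_range)
  then consider "kind P Q \<in> {1,2}" | "kind P Q \<in> {3,4,5,6,8}" | "kind P Q = 7" by blast
  then show ?thesis
  proof cases
    case 1
    then obtain v where "evv v" "encW P Q = shift v Q"
      using k1[OF hP hQ] k2[OF hP hQ] by blast
    then show ?thesis using 1 by blast
  next
    case 2
    then obtain v where "evv v" "encW P Q = shift v (chi Q)"
      using k3[OF hP hQ] k4[OF hP hQ] k5[OF hP hQ] k6[OF hP hQ] k8[OF hP hQ] by blast
    then show ?thesis using 2 by blast
  next
    case 3
    then obtain v where "evv v"
      "shift v (chi Q) = insert (maxc P, aP P + 1) (encW P Q - {(maxc P + 1, aP P)})"
      using k7[OF hP hQ] by blast
    then show ?thesis using 3 by blast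
  qed
qed

end

lemma recover:
  assumes hP: "bpoly l P" "1 \<le> l" and h1: "bpoly m Q1" "2 \<le> m" and h2: "bpoly m Q2"
    and W: "encW P Q1 = encW P Q2"
  shows "beq Q1 Q2"
proof -
  have h2': "2 \<le> m" using h1(2) .
  have kk: "kind P Q1 = kind P Q2"
    using kindW_enc[OF hP h1] kindW_enc[OF hP h2 h2'] W by simp
  let ?W = "encW P Q1"
  let ?W' = "insert (maxc P, aP P + 1) (?W - {(maxc P + 1, aP P)})"
  consider (a) v1 where "evv v1" "?W = shift v1 Q1" "kind P Q1 \<in> {1,2}"
    | (b) v1 where "evv v1" "?W = shift v1 (chi Q1)" "kind P Q1 \<in> {3,4,5,6,8}"
    | (c) v1 where "evv v1" "shift v1 (chi Q1) = ?W'" "kind P Q1 = 7"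
    using enc_shape[OF hP h1] by blast
  note s1 = this
  consider (a) v2 where "evv v2" "?W = shift v2 Q2" "kind P Q2 \<in> {1,2}"
    | (b) v2 where "evv v2" "?W = shift v2 (chi Q2)" "kind P Q2 \<in> {3,4,5,6,8}"
    | (c) v2 where "evv v2" "shift v2 (chi Q2) = ?W'" "kind P Q2 = 7"
    using enc_shape[OF hP h2 h2'] W by auto
  note s2 = this
  show ?thesis
  proof (cases rule: s1)
    case (a v1)
    show ?thesis
    proof (cases rule: s2)
      case (a v2)
      have "beq Q1 ?W" using \<open>evv v1\<close> \<open>?W = shift v1 Q1\<close> beq_shift by simp
      moreover have "beq Q2 ?W" using a(1,2) beq_shift by simp
      ultimately show ?thesis using beq_sym beq_trans by blast
    next
      case (b v2) then show ?thesis using kk \<open>kind P Q1 \<in> {1,2}\<close> by auto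
    next
      case (c v2) then show ?thesis using kk \<open>kind P Q1 \<in> {1,2}\<close> by auto
    qed
  next
    case (b v1)
    show ?thesis
    proof (cases rule: s2)
      case (a v2) then show ?thesis using kk \<open>kind P Q1 \<in> {3,4,5,6,8}\<close> by auto
    next
      case (b v2)
      have "beq (chi Q1) ?W" using \<open>evv v1\<close> \<open>?W = shift v1 (chi Q1)\<close> beq_shift by simp
      moreover have "beq (chi Q2) ?W" using b(1,2) beq_shift by simp
      ultimately have "beq (chi Q1) (chi Q2)" using beq_sym beq_trans by blast
      then show ?thesis by (rule beq_chiD)
    next
      case (c v2) then show ?thesis using kk \<open>kind P Q1 \<in> {3,4,5,6,8}\<close> by auto
    qed
  next
    case (c v1)
    show ?thesis
    proof (cases rule: s2)
      case (a v2) then show ?thesis using kk \<open>kind P Q1 = 7\<close> by auto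
    next
      case (b v2) then show ?thesis using kk \<open>kind P Q1 = 7\<close> by auto
    next
      case (c v2)
      have "beq (chi Q1) ?W'" unfolding beq_def using \<open>evv v1\<close> \<open>shift v1 (chi Q1) = ?W'\<close> by blast
      moreover have "beq (chi Q2) ?W'" unfolding beq_def using c(1,2) by blast
      ultimately have "beq (chi Q1) (chi Q2)" using beq_sym beq_trans by blast
      then show ?thesis by (rule beq_chiD)
    qed
  qed
qed

lemma shift_filter:
  "{c \<in> shift v U. f (tr (- fst v, - snd v) c)} = shift v {c \<in> U. f c}"
proof (rule set_eqI)
  fix c
  show "c \<in> {c \<in> shift v U. f (tr (- fst v, - snd v) c)} \<longleftrightarrow> c \<in> shift v {c \<in> U. f c}"
    by (simp add: mem_shift)
qed

lemma shift_le: "{c \<in> shift v U. fst c \<le> k + fst v} = shift v {c \<in> U. fst c \<le> k}"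
  by (rule set_eqI) (auto simp: mem_shift)

lemma shift_lt: "{c \<in> shift v U. fst c < k + fst v} = shift v {c \<in> U. fst c < k}"
  by (rule set_eqI) (auto simp: mem_shift)

lemma shift_eqc: "{c \<in> shift v U. fst c = k + fst v} = shift v {c \<in> U. fst c = k}"
  by (rule set_eqI) (auto simp: mem_shift)

lemma cnt_shift: "cnt (shift v U) (k + fst v) = cnt U k"
  unfolding cnt_def shift_le by simp

lemma cnt_mono: "finite U \<Longrightarrow> k \<le> k' \<Longrightarrow> cnt U k \<le> cnt U k'"
  unfolding cnt_def by (rule card_mono) auto

lemma two_consec: "{(x::int, a::int), (x, a+1)} = {(x, b), (x, b+1)} \<Longrightarrow> a = b"
proof -
  assume H: "{(x, a), (x, a+1)} = {(x, b), (x, b+1)}"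
  have "(x, a) \<in> {(x, b), (x, b+1)}" by (subst H[symmetric]) simp
  then have 1: "a = b \<or> a = b + 1" by auto
  have "(x, b) \<in> {(x, a), (x, a+1)}" by (subst H) simp
  then have 2: "b = a \<or> b = a + 1" by auto
  show ?thesis using 1 2 by auto
qed

lemma cross:
  assumes h1: "bpoly l P1" "1 \<le> l" "bpoly m Q1" "2 \<le> m"
    and h2: "bpoly l P2" "bpoly m Q2" and v: "evv v"
    and U: "shift v (enc P1 Q1) = enc P2 Q2"
  shows "shift v P1 = P2"
proof -
  let ?U1 = "enc P1 Q1" and ?U2 = "enc P2 Q2" and ?X1 = "maxc P1" and ?X2 = "maxc P2" and ?d = "fst v"
  have fin2: "finite ?U2" using enc_poly[OF h2(1) h1(2) h2(2) h1(4)] by (simp add: bpoly_def)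
  have key: "\<And>k. cnt ?U2 (k + ?d) = cnt ?U1 k" using U cnt_shift by metis
  have mono: "\<And>k k'. k \<le> k' \<Longrightarrow> cnt ?U2 k \<le> cnt ?U2 k'" using cnt_mono[OF fin2] .
  note S1 = enc_split[OF h1]
  note S2 = enc_split[OF h2(1) h1(2) h2(2) h1(4)]
  have l1: "l - 1 < l" "l < l + 1" using h1(2) by auto
  show ?thesis
  proof (cases "cnt ?U1 ?X1 = l \<and> cnt ?U1 (?X1 - 1) < l \<and> {c \<in> ?U1. fst c \<le> ?X1} = P1")
    case A1: True
    have a1: "cnt ?U1 ?X1 = l" "cnt ?U1 (?X1 - 1) < l" using A1 by blast+
    show ?thesis
    proof (cases "cnt ?U2 ?X2 = l \<and> cnt ?U2 (?X2 - 1) < l \<and> {c \<in> ?U2. fst c \<le> ?X2} = P2")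
      case A2: True
      have a2: "cnt ?U2 ?X2 = l" "cnt ?U2 (?X2 - 1) < l" using A2 by blast+
      have X: "?X2 = ?X1 + ?d"
      proof (rule ccontr)
        assume ne: "?X2 \<noteq> ?X1 + ?d"
        show False
        proof (cases "?X1 + ?d < ?X2")
          case True
          then have "cnt ?U2 (?X1 + ?d) \<le> cnt ?U2 (?X2 - 1)" using mono by simp
          then show False using a1 a2 key[of ?X1] by linarith
        next
          case False
          then have "?X2 \<le> (?X1 - 1) + ?d" using ne by simp
          then have "cnt ?U2 ?X2 \<le> cnt ?U2 ((?X1 - 1) + ?d)" using mono by simp
          then show False using a1 a2 key[of "?X1 - 1"] by linarith
        qed
      qed
      have "P2 = {c \<in> ?U2. fst c \<le> ?X1 + ?d}" using A2 X by simp
      also have "\<dots> = shift v {c \<in> ?U1. fst c \<le> ?X1}" using U[symmetric] shift_le by simp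
      also have "\<dots> = shift v P1" using A1 by simp
      finally show ?thesis by simp
    next
      case A2: False
      then have B2: "cnt ?U2 (?X2 - 1) = l - 1" "cnt ?U2 ?X2 = l + 1" using S2 by blast+
      show ?thesis
      proof (cases "?X1 + ?d \<le> ?X2 - 1")
        case True
        then have "cnt ?U2 (?X1 + ?d) \<le> cnt ?U2 (?X2 - 1)" using mono by simp
        then show ?thesis using a1 B2 key[of ?X1] l1 by linarith
      next
        case False
        then have "cnt ?U2 ?X2 \<le> cnt ?U2 (?X1 + ?d)" using mono by simp
        then show ?thesis using a1 B2 key[of ?X1] l1 by linarith
      qed
    qed
  next
    case A1: False
    then have B1: "cnt ?U1 (?X1 - 1) = l - 1" "cnt ?U1 ?X1 = l + 1"
      "\<exists>r. {c \<in> ?U1. fst c = ?X1} = {(?X1, r), (?X1, r + 1)} \<and>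
         {c \<in> ?U1. fst c < ?X1} \<union> {sel ?U1 ?X1 r} = P1" using S1 by blast+
    show ?thesis
    proof (cases "cnt ?U2 ?X2 = l \<and> cnt ?U2 (?X2 - 1) < l \<and> {c \<in> ?U2. fst c \<le> ?X2} = P2")
      case A2: True
      have a2: "cnt ?U2 ?X2 = l" "cnt ?U2 (?X2 - 1) < l" using A2 by blast+
      have k2: "cnt ?U1 (?X2 - ?d) = l" using a2 key[of "?X2 - ?d"] by simp
      have fin1: "finite ?U1" using enc_poly[OF h1] by (simp add: bpoly_def)
      show ?thesis
      proof (cases "?X2 - ?d \<le> ?X1 - 1")
        case True
        then have "cnt ?U1 (?X2 - ?d) \<le> cnt ?U1 (?X1 - 1)" using cnt_mono[OF fin1] by simp
        then show ?thesis using k2 B1 l1 by linarith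
      next
        case False
        then have "cnt ?U1 ?X1 \<le> cnt ?U1 (?X2 - ?d)" using cnt_mono[OF fin1] by simp
        then show ?thesis using k2 B1 l1 by linarith
      qed
    next
      case A2: False
      then have B2: "cnt ?U2 (?X2 - 1) = l - 1" "cnt ?U2 ?X2 = l + 1"
        "\<exists>r. {c \<in> ?U2. fst c = ?X2} = {(?X2, r), (?X2, r + 1)} \<and>
         {c \<in> ?U2. fst c < ?X2} \<union> {sel ?U2 ?X2 r} = P2" using S2 by blast+
      have X: "?X2 = ?X1 + ?d"
      proof (rule ccontr)
        assume ne: "?X2 \<noteq> ?X1 + ?d"
        show False
        proof (cases "?X1 + ?d < ?X2")
          case True
          then have "cnt ?U2 (?X1 + ?d) \<le> cnt ?U2 (?X2 - 1)" using mono by simp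
          then show False using B1(1,2) B2(1,2) key[of ?X1] l1 by linarith
        next
          case False
          then have "?X2 \<le> (?X1 - 1) + ?d" using ne by simp
          then have "cnt ?U2 ?X2 \<le> cnt ?U2 ((?X1 - 1) + ?d)" using mono by simp
          then show False using B1(1,2) B2(1,2) key[of "?X1 - 1"] l1 by linarith
        qed
      qed
      obtain r1 where r1: "{c \<in> ?U1. fst c = ?X1} = {(?X1, r1), (?X1, r1 + 1)}"
        "{c \<in> ?U1. fst c < ?X1} \<union> {sel ?U1 ?X1 r1} = P1" using B1(3) by blast
      obtain r2 where r2: "{c \<in> ?U2. fst c = ?X2} = {(?X2, r2), (?X2, r2 + 1)}"
        "{c \<in> ?U2. fst c < ?X2} \<union> {sel ?U2 ?X2 r2} = P2" using B2(3) by blast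
      have "{c \<in> ?U2. fst c = ?X2} = shift v {c \<in> ?U1. fst c = ?X1}"
        using X U[symmetric] shift_eqc by simp
      also have "\<dots> = {(?X2, r1 + snd v), (?X2, r1 + snd v + 1)}"
        using r1(1) X by (simp add: tr_def algebra_simps)
      finally have "r2 = r1 + snd v" using r2(1) two_consec by metis
      then have sel: "sel ?U2 ?X2 r2 = tr v (sel ?U1 ?X1 r1)"
      proof -
        assume rr: "r2 = r1 + snd v"
        have t1: "tr v (?X1, r1) = (?X2, r2)" using X rr by (simp add: tr_def)
        have t2: "tr v (?X1, r1 + 1) = (?X2, r2 + 1)" using X rr by (simp add: tr_def)
        have t3: "tr v (?X1 + 1, r1 + 1) = (?X2 + 1, r2 + 1)" using X rr by (simp add: tr_def)
        have p: "po (?X2, r2) = po (?X1, r1)" using po_tr[OF v] t1 by metis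
        have m: "(?X2 + 1, r2 + 1) \<in> ?U2 \<longleftrightarrow> (?X1 + 1, r1 + 1) \<in> ?U1"
          using U tr_mem_shift t3 by metis
        show ?thesis unfolding sel_def using p m t1 t2 by auto
      qed
      have "P2 = {c \<in> ?U2. fst c < ?X1 + ?d} \<union> {sel ?U2 ?X2 r2}" using r2(2) X by simp
      also have "\<dots> = shift v {c \<in> ?U1. fst c < ?X1} \<union> {tr v (sel ?U1 ?X1 r1)}"
        using U[symmetric] shift_lt sel by simp
      also have "\<dots> = shift v ({c \<in> ?U1. fst c < ?X1} \<union> {sel ?U1 ?X1 r1})" by simp
      also have "\<dots> = shift v P1" using r1(2) by simp
      finally show ?thesis by simp
    qed
  qed
qed

definition rep :: "pt set set \<Rightarrow> pt set" where "rep K = (SOME S. S \<in> K)"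

lemma rep_props: "K \<in> BCls n \<Longrightarrow> bpoly n (rep K) \<and> K = bclass n (rep K)"
proof -
  assume "K \<in> BCls n"
  then obtain S where S: "K = bclass n S" "bpoly n S" by (auto simp: BCls_def)
  have "S \<in> K" using S bclass_mem by simp
  then have "rep K \<in> K" unfolding rep_def by (rule someI)
  then have r: "bpoly n (rep K)" "beq S (rep K)" using S(1) by (auto simp: bclass_def)
  have "bclass n S = bclass n (rep K)" using bclass_eq[OF r(2)] .
  then show ?thesis using S(1) r(1) by simp
qed

lemma encW_from_enc:
  assumes "bpoly l P" "1 \<le> l" "bpoly m Q" "2 \<le> m"
  shows "encW P Q = enc P Q - P"
proof -
  have "P \<inter> encW P Q = {}" using W_props[OF assms] by blast
  then show ?thesis by (auto simp: enc_def)
qed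

lemma main_brick:
  assumes l: "1 \<le> l" and m: "2 \<le> m"
  shows "card (BCls l) * card (BCls m) \<le> card (BCls (l + m))"
proof -
  define F where "F = (\<lambda>(K1, K2). bclass (l + m) (enc (rep K1) (rep K2)))"
  have img: "F ` (BCls l \<times> BCls m) \<subseteq> BCls (l + m)"
  proof
    fix K assume "K \<in> F ` (BCls l \<times> BCls m)"
    then obtain K1 K2 where K: "K1 \<in> BCls l" "K2 \<in> BCls m" "K = F (K1, K2)" by blast
    have "bpoly l (rep K1)" "bpoly m (rep K2)" using rep_props K by blast+
    then have "bpoly (l + m) (enc (rep K1) (rep K2))" using enc_poly l m by blast
    then show "K \<in> BCls (l + m)" using K(3) unfolding F_def BCls_def by auto
  qed
  have inj: "inj_on F (BCls l \<times> BCls m)"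
  proof (rule inj_onI)
    fix x y assume x: "x \<in> BCls l \<times> BCls m" and y: "y \<in> BCls l \<times> BCls m" and Fxy: "F x = F y"
    obtain K1 K2 where xk: "x = (K1, K2)" "K1 \<in> BCls l" "K2 \<in> BCls m" using x by blast
    obtain K1' K2' where yk: "y = (K1', K2')" "K1' \<in> BCls l" "K2' \<in> BCls m" using y by blast
    define P where "P = rep K1"
    define Q where "Q = rep K2"
    define P' where "P' = rep K1'"
    define Q' where "Q' = rep K2'"
    have hP: "bpoly l P" "K1 = bclass l P" using rep_props[OF xk(2)] P_def by auto
    have hQ: "bpoly m Q" "K2 = bclass m Q" using rep_props[OF xk(3)] Q_def by auto
    have hP': "bpoly l P'" "K1' = bclass l P'" using rep_props[OF yk(2)] P'_def by auto
    have hQ': "bpoly m Q'" "K2' = bclass m Q'" using rep_props[OF yk(3)] Q'_def by auto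
    have E: "bpoly (l + m) (enc P Q)" using enc_poly[OF hP(1) l hQ(1) m] .
    have "bclass (l + m) (enc P Q) = bclass (l + m) (enc P' Q')"
      using Fxy xk(1) yk(1) unfolding F_def P_def Q_def P'_def Q'_def by simp
    then have "beq (enc P' Q') (enc P Q)" by (rule bclass_eqD[OF E])
    then obtain v where v: "evv v" "shift v (enc P' Q') = enc P Q" by (auto simp: beq_def)
    have sP: "shift v P' = P" using cross[OF hP'(1) l hQ'(1) m hP(1) hQ(1) v(1) v(2)] .
    have "beq P' P" unfolding beq_def using v(1) sP[symmetric] by blast
    then have "bclass l P' = bclass l P" by (rule bclass_eq)
    then have K1eq: "K1' = K1" using hP(2) hP'(2) by simp
    then have PP: "P' = P" using P_def P'_def by simp
    have "finite P" "P \<noteq> {}" using hP(1) l by (auto simp: bpoly_def)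
    then have "v = (0,0)" using shift_fix sP PP by simp
    then have "enc P Q' = enc P Q" using v(2) PP by simp
    then have "encW P Q' = encW P Q"
      using encW_from_enc[OF hP(1) l hQ'(1) m] encW_from_enc[OF hP(1) l hQ(1) m] by simp
    then have "beq Q' Q" using recover[OF hP(1) l hQ'(1) m hQ(1)] by simp
    then have "bclass m Q' = bclass m Q" by (rule bclass_eq)
    then have "K2' = K2" using hQ(2) hQ'(2) by simp
    then show "x = y" using xk(1) yk(1) K1eq by simp
  qed
  have "card (BCls l \<times> BCls m) \<le> card (BCls (l + m))"
    using card_inj_on_le[OF inj img finite_BCls] .
  then show ?thesis by (simp add: card_cartesian_product)
qed

theorem theorem4:
  fixes l m :: nat
  assumes "l \<ge> 1" and "m \<ge> 1" and "\<not> (l = 1 \<and> m = 1)"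
  shows "T (l + m) \<ge> T l * T m"
proof (cases "m \<ge> 2")
  case True
  then show ?thesis using main_brick[OF assms(1) True] by (simp add: T_BCls)
next
  case False
  then have "m = 1" using assms(2) by simp
  then have "l \<ge> 2" using assms(1,3) by simp
  then have "card (BCls m) * card (BCls l) \<le> card (BCls (m + l))"
    using main_brick[of m l] \<open>m = 1\<close> by simp
  then show ?thesis by (simp add: T_BCls mult.commute add.commute)
qed

end
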